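(* There exists $n_0$ such that the following holds for every integer $n \geq n_0$. Let $F$ be any graph on $n$ vertices with no isolated vertices, with minimum degree $\delta(F)=\delta$ and maximum degree $\Delta(F) \leq \sqrt{n}/40$. If $G$ is an $n$-vertex graph containing no subgraph isomorphic to $F$, then $\lambda(G) \leq \lambda(H_{n,\delta})$, with equality if and only if $G \cong H_{n,\delta}$.
   Context: All graphs are finite and simple. $\lambda(G)$ denotes the spectral radius (largest eigenvalue) of the adjacency matrix of $G$. For integers $n>k\geq 1$, $H_{n,k} = K_{k-1} \vee (K_{n-k} \cup K_1)$, i.e. the $n$-vertex graph consisting of a clique on $n-1$ vertices together with one additional vertex adjacent to exactly $k-1$ vertices of the clique; here $\vee$ denotes the join (all edges between the two graphs added) and $\cup$ the disjoint union. *)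

theory Defs
  imports Complex_Main "Jordan_Normal_Form.Char_Poly"
begin

definition sgraph :: "nat \<Rightarrow> (nat \<Rightarrow> nat \<Rightarrow> bool) \<Rightarrow> bool" where
  "sgraph n E \<longleftrightarrow> (\<forall>i j. E i j \<longrightarrow> i < n \<and> j < n) \<and> (\<forall>i j. E i j \<longrightarrow> E j i)
                 \<and> (\<forall>i. \<not> E i i)"

definition degree :: "nat \<Rightarrow> (nat \<Rightarrow> nat \<Rightarrow> bool) \<Rightarrow> nat \<Rightarrow> nat" where
  "degree n E i = card {j. j < n \<and> E i j}"

definition min_degree :: "nat \<Rightarrow> (nat \<Rightarrow> nat \<Rightarrow> bool) \<Rightarrow> nat" where
  "min_degree n E = Min (degree n E ` {..<n})"

definition max_degree :: "nat \<Rightarrow> (nat \<Rightarrow> nat \<Rightarrow> bool) \<Rightarrow> nat" where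
  "max_degree n E = Max (degree n E ` {..<n})"

definition adj_matrix :: "nat \<Rightarrow> (nat \<Rightarrow> nat \<Rightarrow> bool) \<Rightarrow> real mat" where
  "adj_matrix n E = mat n n (\<lambda>(i, j). if E i j then 1 else 0)"

definition spec_rad :: "nat \<Rightarrow> (nat \<Rightarrow> nat \<Rightarrow> bool) \<Rightarrow> real" where
  "spec_rad n E = Max {x. eigenvalue (adj_matrix n E) x}"

definition contains_subgraph ::
  "nat \<Rightarrow> (nat \<Rightarrow> nat \<Rightarrow> bool) \<Rightarrow> nat \<Rightarrow> (nat \<Rightarrow> nat \<Rightarrow> bool) \<Rightarrow> bool" where
  "contains_subgraph n G m F \<longleftrightarrow>
     (\<exists>f. inj_on f {..<m} \<and> f ` {..<m} \<subseteq> {..<n} \<and>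
          (\<forall>i<m. \<forall>j<m. F i j \<longrightarrow> G (f i) (f j)))"

definition graph_iso :: "nat \<Rightarrow> (nat \<Rightarrow> nat \<Rightarrow> bool) \<Rightarrow> (nat \<Rightarrow> nat \<Rightarrow> bool) \<Rightarrow> bool" where
  "graph_iso n G H \<longleftrightarrow>
     (\<exists>f. bij_betw f {..<n} {..<n} \<and> (\<forall>i<n. \<forall>j<n. G i j \<longleftrightarrow> H (f i) (f j)))"

text \<open>H_{n,k} = K_{k-1} join (K_{n-k} disjoint-union K_1): vertices 0..k-2 form K_{k-1},
vertices k-1..n-2 form K_{n-k}, vertex n-1 is the K_1.\<close>

definition H_graph :: "nat \<Rightarrow> nat \<Rightarrow> nat \<Rightarrow> nat \<Rightarrow> bool" where
  "H_graph n k i j \<longleftrightarrow> i < n \<and> j < n \<and> i \<noteq> j \<and>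
     ((i < n - 1 \<and> j < n - 1) \<or> (i = n - 1 \<and> j < k - 1) \<or> (j = n - 1 \<and> i < k - 1))"

end

theory Submission
  imports Defs "Jordan_Normal_Form.Spectral_Radius"
begin


lemma adj_carrier: "adj_matrix n E \<in> carrier_mat n n"
  unfolding adj_matrix_def by simp

lemma adj_mult: "i < n \<Longrightarrow> v \<in> carrier_vec n \<Longrightarrow>
   (adj_matrix n E *\<^sub>v v) $ i = (\<Sum>j<n. if E i j then v $ j else 0)"
  unfolding adj_matrix_def
  by (auto simp: mult_mat_vec_def scalar_prod_def lessThan_atLeast0 intro!: sum.cong)

lemma eig_iff: "eigenvalue (adj_matrix n E) l \<longleftrightarrow>
   (\<exists>v. (\<exists>i<n. v i \<noteq> 0) \<and> (\<forall>i<n. (\<Sum>j<n. if E i j then v j else 0) = l * v i))"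
proof
  assume "eigenvalue (adj_matrix n E) l"
  then obtain v where v: "v \<in> carrier_vec n" "v \<noteq> 0\<^sub>v n" "adj_matrix n E *\<^sub>v v = l \<cdot>\<^sub>v v"
    unfolding eigenvalue_def eigenvector_def using adj_carrier[of n E] by auto
  have "\<exists>i<n. v $ i \<noteq> 0"
  proof (rule ccontr)
    assume "\<not> ?thesis"
    then have "v = 0\<^sub>v n" using v(1) by (intro eq_vecI) auto
    with v(2) show False by simp
  qed
  moreover have "\<forall>i<n. (\<Sum>j<n. if E i j then v $ j else 0) = l * v $ i"
  proof (intro allI impI)
    fix i assume i: "i < n"
    have "(adj_matrix n E *\<^sub>v v) $ i = (l \<cdot>\<^sub>v v) $ i" using v(3) by simp
    then show "(\<Sum>j<n. if E i j then v $ j else 0) = l * v $ i"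
      using adj_mult[OF i v(1)] i v(1) by simp
  qed
  ultimately show "\<exists>v. (\<exists>i<n. v i \<noteq> 0) \<and> (\<forall>i<n. (\<Sum>j<n. if E i j then v j else 0) = l * v i)"
    by (intro exI[of _ "\<lambda>i. v $ i"]) auto
next
  assume "\<exists>v. (\<exists>i<n. v i \<noteq> 0) \<and> (\<forall>i<n. (\<Sum>j<n. if E i j then v j else 0) = l * v i)"
  then obtain f where f: "\<exists>i<n. f i \<noteq> 0" "\<forall>i<n. (\<Sum>j<n. if E i j then f j else 0) = l * f i"
    by blast
  define v where "v = vec n f"
  have vc: "v \<in> carrier_vec n" unfolding v_def by simp
  have "v \<noteq> 0\<^sub>v n"
  proof
    assume "v = 0\<^sub>v n"
    then have "\<forall>i<n. f i = 0" unfolding v_def by (metis index_vec index_zero_vec(1))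
    with f(1) show False by auto
  qed
  moreover have "adj_matrix n E *\<^sub>v v = l \<cdot>\<^sub>v v"
  proof (rule eq_vecI)
    fix i assume "i < dim_vec (l \<cdot>\<^sub>v v)"
    then have i: "i < n" using vc by simp
    have "(\<Sum>j<n. if E i j then v $ j else 0) = (\<Sum>j<n. if E i j then f j else 0)"
      by (rule sum.cong) (auto simp: v_def)
    then show "(adj_matrix n E *\<^sub>v v) $ i = (l \<cdot>\<^sub>v v) $ i"
      using adj_mult[OF i vc] f(2) i vc by (simp add: v_def)
  qed (simp add: adj_matrix_def v_def)
  ultimately show "eigenvalue (adj_matrix n E) l"
    unfolding eigenvalue_def eigenvector_def using vc adj_carrier[of n E] by auto
qed

lemma eig_finite: "finite {x. eigenvalue (adj_matrix n E) x}"
  using card_finite_spectrum(1)[OF adj_carrier[of n E]] unfolding spectrum_def by simp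

definition adjm :: "nat \<Rightarrow> (nat \<Rightarrow> nat \<Rightarrow> bool) \<Rightarrow> 'a::field mat" where
  "adjm n E = mat n n (\<lambda>(i, j). if E i j then 1 else 0)"

lemma adjm_carrier: "adjm n E \<in> carrier_mat n n"
  unfolding adjm_def by simp

lemma adjm_dim[simp]: "dim_row (adjm n E) = n" "dim_col (adjm n E) = n"
  unfolding adjm_def by simp_all

lemma adjm_mult: "i < n \<Longrightarrow> v \<in> carrier_vec n \<Longrightarrow>
   (adjm n E *\<^sub>v v) $ i = (\<Sum>j<n. if E i j then v $ j else 0)"
  unfolding adjm_def
  by (auto simp: mult_mat_vec_def scalar_prod_def lessThan_atLeast0 intro!: sum.cong)

lemma eig_iff_gen: "eigenvalue (adjm n E :: 'a::field mat) l \<longleftrightarrow>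
   (\<exists>v. (\<exists>i<n. v i \<noteq> 0) \<and> (\<forall>i<n. (\<Sum>j<n. if E i j then v j else 0) = l * v i))"
proof
  assume "eigenvalue (adjm n E :: 'a mat) l"
  then obtain v where v: "v \<in> carrier_vec n" "v \<noteq> 0\<^sub>v n" "(adjm n E :: 'a mat) *\<^sub>v v = l \<cdot>\<^sub>v v"
    unfolding eigenvalue_def eigenvector_def using adjm_carrier[of n E] by auto
  have "\<exists>i<n. v $ i \<noteq> 0"
  proof (rule ccontr)
    assume "\<not> ?thesis"
    then have "v = 0\<^sub>v n" using v(1) by (intro eq_vecI) auto
    with v(2) show False by simp
  qed
  moreover have "\<forall>i<n. (\<Sum>j<n. if E i j then v $ j else 0) = l * v $ i"
  proof (intro allI impI)
    fix i assume i: "i < n"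
    have "((adjm n E :: 'a mat) *\<^sub>v v) $ i = (l \<cdot>\<^sub>v v) $ i" using v(3) by simp
    then show "(\<Sum>j<n. if E i j then v $ j else 0) = l * v $ i"
      using adjm_mult[OF i v(1)] i v(1) by simp
  qed
  ultimately show "\<exists>v. (\<exists>i<n. v i \<noteq> 0) \<and> (\<forall>i<n. (\<Sum>j<n. if E i j then v j else 0) = l * v i)"
    by (intro exI[of _ "\<lambda>i. v $ i"]) auto
next
  assume "\<exists>v. (\<exists>i<n. v i \<noteq> 0) \<and> (\<forall>i<n. (\<Sum>j<n. if E i j then v j else 0) = l * v i)"
  then obtain f where f: "\<exists>i<n. f i \<noteq> 0" "\<forall>i<n. (\<Sum>j<n. if E i j then f j else 0) = l * f i"
    by blast
  define v where "v = vec n f"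
  have vc: "v \<in> carrier_vec n" unfolding v_def by simp
  have "v \<noteq> 0\<^sub>v n"
  proof
    assume "v = 0\<^sub>v n"
    then have "\<forall>i<n. f i = 0" unfolding v_def by (metis index_vec index_zero_vec(1))
    with f(1) show False by auto
  qed
  moreover have "(adjm n E :: 'a mat) *\<^sub>v v = l \<cdot>\<^sub>v v"
  proof (rule eq_vecI)
    fix i assume "i < dim_vec (l \<cdot>\<^sub>v v)"
    then have i: "i < n" using vc by simp
    have "(\<Sum>j<n. if E i j then v $ j else 0) = (\<Sum>j<n. if E i j then f j else 0)"
      by (rule sum.cong) (auto simp: v_def)
    then show "((adjm n E :: 'a mat) *\<^sub>v v) $ i = (l \<cdot>\<^sub>v v) $ i"
      using adjm_mult[OF i vc] f(2) i vc by (simp add: v_def)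
  qed (simp add: adjm_def v_def)
  ultimately show "eigenvalue (adjm n E :: 'a mat) l"
    unfolding eigenvalue_def eigenvector_def using vc by auto
qed

lemma adj_matrix_adjm: "adj_matrix n E = adjm n E"
  unfolding adj_matrix_def adjm_def by simp

lemma map_adjm: "map_mat complex_of_real (adj_matrix n E) = adjm n E"
  unfolding adj_matrix_def adjm_def by (rule eq_matI) auto

lemma cnj_mult_self: "cnj z * z = complex_of_real ((cmod z)^2)"
  by (subst complex_norm_square) (simp add: mult.commute)

lemma eig_exists:
  assumes n: "n > 0" and sym: "\<forall>i j. E i j \<longrightarrow> E j i"
  shows "\<exists>l. eigenvalue (adj_matrix n E) l"
proof -
  have "spectrum (adjm n E :: complex mat) \<noteq> {}"
    by (rule spectrum_non_empty[OF adjm_carrier n])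
  then obtain c where "eigenvalue (adjm n E :: complex mat) c" unfolding spectrum_def by auto
  then obtain w where w: "\<exists>i<n. w i \<noteq> 0"
     "\<forall>i<n. (\<Sum>j<n. if E i j then w j else 0) = c * w i"
    unfolding eig_iff_gen by blast
  define N where "N = (\<Sum>i<n. cnj (w i) * w i)"
  define L where "L = (\<Sum>i<n. \<Sum>j<n. if E i j then cnj (w i) * w j else 0)"
  have NR: "N = of_real (\<Sum>i<n. (cmod (w i))^2)"
    unfolding N_def of_real_sum by (intro sum.cong refl) (rule cnj_mult_self)
  from w(1) obtain i0 where i0: "i0 < n" "w i0 \<noteq> 0" by auto
  have "(\<Sum>i<n. (cmod (w i))^2) \<ge> (cmod (w i0))^2"
    using i0 by (intro member_le_sum) auto
  moreover have "(cmod (w i0))^2 > 0" using i0 by simp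
  ultimately have Npos: "(\<Sum>i<n. (cmod (w i))^2) > 0" by linarith
  have LN: "L = c * N"
  proof -
    have "L = (\<Sum>i<n. cnj (w i) * (\<Sum>j<n. if E i j then w j else 0))"
      unfolding L_def by (simp add: sum_distrib_left if_distrib cong: if_cong)
    also have "\<dots> = (\<Sum>i<n. cnj (w i) * (c * w i))"
      using w(2) by (intro sum.cong) auto
    also have "\<dots> = c * N" unfolding N_def by (simp add: sum_distrib_left algebra_simps)
    finally show ?thesis .
  qed
  have "cnj L = (\<Sum>i<n. \<Sum>j<n. if E i j then w i * cnj (w j) else 0)"
    unfolding L_def by (simp add: if_distrib cong: if_cong)
  also have "\<dots> = (\<Sum>j<n. \<Sum>i<n. if E i j then w i * cnj (w j) else 0)"
    by (rule sum.swap)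
  also have "\<dots> = L" unfolding L_def
    using sym by (intro sum.cong refl) (auto simp: mult.commute)
  finally have "cnj L = L" .
  then have "Im L = 0" by (metis Reals_cnj_iff complex_is_Real_iff)
  then have "Im (c * N) = 0" using LN by simp
  then have Imc: "Im c = 0" using NR Npos by simp
  define u where "u i = Re (w i)" for i
  define v where "v i = Im (w i)" for i
  have eu: "\<forall>i<n. (\<Sum>j<n. if E i j then u j else 0) = Re c * u i"
  proof (intro allI impI)
    fix i assume "i < n"
    then have "Re (\<Sum>j<n. if E i j then w j else 0) = Re (c * w i)" using w(2) by simp
    then show "(\<Sum>j<n. if E i j then u j else 0) = Re c * u i"
      using Imc by (simp add: u_def if_distrib cong: if_cong)
  qed
  have ev: "\<forall>i<n. (\<Sum>j<n. if E i j then v j else 0) = Re c * v i"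
  proof (intro allI impI)
    fix i assume "i < n"
    then have "Im (\<Sum>j<n. if E i j then w j else 0) = Im (c * w i)" using w(2) by simp
    then show "(\<Sum>j<n. if E i j then v j else 0) = Re c * v i"
      using Imc by (simp add: v_def if_distrib cong: if_cong)
  qed
  have "u i0 \<noteq> 0 \<or> v i0 \<noteq> 0" using i0 complex_eqI unfolding u_def v_def by force
  then show ?thesis
  proof
    assume "u i0 \<noteq> 0"
    then show ?thesis unfolding adj_matrix_adjm eig_iff_gen using eu i0 by blast
  next
    assume "v i0 \<noteq> 0"
    then show ?thesis unfolding adj_matrix_adjm eig_iff_gen using ev i0 by blast
  qed
qed


definition Q :: "(nat \<Rightarrow> nat \<Rightarrow> bool) \<Rightarrow> nat \<Rightarrow> (nat \<Rightarrow> real) \<Rightarrow> real" where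
  "Q E n y = (\<Sum>i<n. \<Sum>j<n. if E i j then y i * y j else 0)"

definition nrm :: "nat \<Rightarrow> (nat \<Rightarrow> real) \<Rightarrow> real" where
  "nrm n y = (\<Sum>i<n. (y i)^2)"

lemma nrm_pos: "\<exists>i<n. y i \<noteq> 0 \<Longrightarrow> nrm n y > 0"
proof -
  assume "\<exists>i<n. y i \<noteq> 0"
  then obtain i where i: "i < n" "y i \<noteq> 0" by auto
  have "(y i)^2 \<le> nrm n y" unfolding nrm_def using i by (intro member_le_sum) auto
  moreover have "(y i)^2 > 0" using i by simp
  ultimately show ?thesis by linarith
qed

lemma eig_vec:
  assumes "eigenvalue (adj_matrix n E) l"
  shows "\<exists>y. (\<forall>i. y i \<ge> 0) \<and> (\<exists>i<n. y i \<noteq> 0) \<and> l * nrm n y \<le> Q E n y \<and>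
     (l \<ge> 0 \<longrightarrow> (\<forall>i<n. l * y i \<le> (\<Sum>j<n. if E i j then y j else 0)))"
proof -
  obtain v where v: "\<exists>i<n. v i \<noteq> 0" "\<forall>i<n. (\<Sum>j<n. if E i j then v j else 0) = l * v i"
    using assms unfolding eig_iff by blast
  define y where "y i = \<bar>v i\<bar>" for i
  have "Q E n v = (\<Sum>i<n. v i * (\<Sum>j<n. if E i j then v j else 0))"
    unfolding Q_def by (simp add: sum_distrib_left if_distrib cong: if_cong)
  also have "\<dots> = (\<Sum>i<n. l * (v i)^2)"
    using v(2) by (intro sum.cong) (auto simp: power2_eq_square)
  also have "\<dots> = l * nrm n y" unfolding nrm_def y_def by (simp add: sum_distrib_left)
  finally have Qv: "Q E n v = l * nrm n y" .
  have "Q E n v \<le> Q E n y" unfolding Q_def y_def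
    by (intro sum_mono) (auto simp: abs_mult[symmetric])
  moreover have "l \<ge> 0 \<longrightarrow> (\<forall>i<n. l * y i \<le> (\<Sum>j<n. if E i j then y j else 0))"
  proof (intro impI allI)
    fix i assume l: "l \<ge> 0" and i: "i < n"
    have "l * y i = \<bar>l * v i\<bar>" using l by (simp add: y_def abs_mult)
    also have "\<dots> = \<bar>\<Sum>j<n. if E i j then v j else 0\<bar>" using v(2) i by simp
    also have "\<dots> \<le> (\<Sum>j<n. \<bar>if E i j then v j else 0\<bar>)" by (rule sum_abs)
    also have "\<dots> = (\<Sum>j<n. if E i j then y j else 0)" by (intro sum.cong) (auto simp: y_def)
    finally show "l * y i \<le> (\<Sum>j<n. if E i j then y j else 0)" .
  qed
  ultimately show ?thesis using Qv v(1)
    by (intro exI[of _ y]) (auto simp: y_def)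
qed

lemma test_vector_bound:
  fixes p z :: "nat \<Rightarrow> real"
  assumes sym: "\<And>i j. i < n \<Longrightarrow> j < n \<Longrightarrow> E i j \<Longrightarrow> E j i"
    and pos: "\<And>i j. i < n \<Longrightarrow> j < n \<Longrightarrow> E i j \<Longrightarrow> p i > 0"
    and row: "\<And>i. i < n \<Longrightarrow> p i > 0 \<Longrightarrow> (\<Sum>j<n. if E i j then p j else 0) \<le> mu * p i"
    and mu: "mu \<ge> 0"
  shows "Q E n z + (\<Sum>i<n. \<Sum>j<n. if E i j then (z i * p j - z j * p i)^2 / (2 * p i * p j) else 0)
          \<le> mu * nrm n z"
proof -
  define A where "A i j = (if E i j then (z i)^2 * p j / (2 * p i) else 0)" for i j
  define C where "C i j = (if E i j then (z i * p j - z j * p i)^2 / (2 * p i * p j) else 0)" for i j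
  have pos2: "i < n \<Longrightarrow> j < n \<Longrightarrow> E i j \<Longrightarrow> p j > 0" for i j using pos sym by blast
  have key: "(if E i j then z i * z j else 0) + C i j = A i j + A j i" if "i < n" "j < n" for i j
  proof (cases "E i j")
    case True
    then have "E j i" using sym that by blast
    have pi: "p i > 0" and pj: "p j > 0" using pos pos2 that True by auto
    show ?thesis using True \<open>E j i\<close> pi pj unfolding A_def C_def
      by (simp add: field_simps power2_eq_square)
  next
    case False
    then have "\<not> E j i" using sym that by blast
    then show ?thesis using False unfolding A_def C_def by simp
  qed
  have "Q E n z + (\<Sum>i<n. \<Sum>j<n. C i j) = (\<Sum>i<n. \<Sum>j<n. A i j + A j i)"
    unfolding Q_def sum.distrib[symmetric] using key by (intro sum.cong refl) auto
  also have "\<dots> = (\<Sum>i<n. \<Sum>j<n. A i j) + (\<Sum>i<n. \<Sum>j<n. A j i)"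
    by (simp add: sum.distrib)
  also have "(\<Sum>i<n. \<Sum>j<n. A j i) = (\<Sum>i<n. \<Sum>j<n. A i j)" by (rule sum.swap)
  also have "(\<Sum>i<n. \<Sum>j<n. A i j) + (\<Sum>i<n. \<Sum>j<n. A i j) \<le> mu * nrm n z"
  proof -
    have "2 * (\<Sum>j<n. A i j) \<le> mu * (z i)^2" if i: "i < n" for i
    proof (cases "p i > 0")
      case True
      have "2 * (\<Sum>j<n. A i j) = ((z i)^2 / p i) * (\<Sum>j<n. if E i j then p j else 0)"
        unfolding A_def sum_distrib_left by (intro sum.cong) auto
      also have "\<dots> \<le> ((z i)^2 / p i) * (mu * p i)"
        using row[OF i True] True by (intro mult_left_mono) auto
      also have "\<dots> = mu * (z i)^2" using True by simp
      finally show ?thesis .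
    next
      case False
      then have "A i j = 0" if "j < n" for j using pos[OF i that] unfolding A_def by auto
      then show ?thesis using mu by simp
    qed
    then have "(\<Sum>i<n. 2 * (\<Sum>j<n. A i j)) \<le> (\<Sum>i<n. mu * (z i)^2)" by (intro sum_mono) auto
    then show ?thesis unfolding nrm_def sum_distrib_left[symmetric] by simp
  qed
  finally show ?thesis unfolding C_def .
qed


lemma sum_split_at:
  fixes f :: "nat \<Rightarrow> real"
  assumes "s \<le> m"
  shows "(\<Sum>j<m. f j) = (\<Sum>j<s. f j) + (\<Sum>j\<in>{s..<m}. f j)"
proof -
  have "{..<m} = {..<s} \<union> {s..<m}" using assms by auto
  moreover have "{..<s} \<inter> {s..<m} = {}" by auto
  ultimately show ?thesis by (simp add: sum.union_disjoint)
qed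

definition pH :: "nat \<Rightarrow> nat \<Rightarrow> real \<Rightarrow> real \<Rightarrow> nat \<Rightarrow> real" where
  "pH n s b c j = (if j < s then 1 else if j < n - 1 then b else c)"

lemma sum_pH_n1:
  assumes "s \<le> n - 1"
  shows "(\<Sum>j<n - 1. pH n s b c j) = real s + real (n - 1 - s) * b"
proof -
  have "(\<Sum>j<n - 1. pH n s b c j) = (\<Sum>j<s. pH n s b c j) + (\<Sum>j\<in>{s..<n-1}. pH n s b c j)"
    by (rule sum_split_at[OF assms])
  also have "(\<Sum>j<s. pH n s b c j) = real s" by (simp add: pH_def)
  also have "(\<Sum>j\<in>{s..<n-1}. pH n s b c j) = (\<Sum>j\<in>{s..<n-1}. b)"
    by (intro sum.cong) (auto simp: pH_def)
  also have "\<dots> = real (n - 1 - s) * b" by simp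
  finally show ?thesis .
qed

lemma sum_pH_n:
  assumes "s \<le> n - 1" "n \<ge> 1"
  shows "(\<Sum>j<n. pH n s b c j) = real s + real (n - 1 - s) * b + c"
proof -
  have "n = Suc (n - 1)" using assms by simp
  then have "(\<Sum>j<n. pH n s b c j) = (\<Sum>j<n - 1. pH n s b c j) + pH n s b c (n - 1)"
    by (metis sum.lessThan_Suc)
  then show ?thesis using sum_pH_n1[OF assms(1)] assms by (simp add: pH_def)
qed

lemma sum_remove_pt:
  fixes f :: "nat \<Rightarrow> real"
  assumes "i < m"
  shows "(\<Sum>j<m. if j \<noteq> i then f j else 0) = (\<Sum>j<m. f j) - f i"
proof -
  have "(\<Sum>j<m. f j) = (\<Sum>j<m. (if j \<noteq> i then f j else 0) + (if j = i then f j else 0))"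
    by (intro sum.cong) auto
  also have "\<dots> = (\<Sum>j<m. if j \<noteq> i then f j else 0) + f i"
    using assms by (simp add: sum.distrib)
  finally show ?thesis by simp
qed

lemma H_row:
  assumes k: "1 \<le> k" "k < n" and i: "i < n"
  shows "(\<Sum>j<n. if H_graph n k i j then pH n (k - 1) b c j else 0) =
     (if i < k - 1 then real (k - 1) - 1 + real (n - k) * b + c
      else if i < n - 1 then real (k - 1) + (real (n - k) - 1) * b
      else real (k - 1))"
proof -
  let ?s = "k - 1"
  let ?p = "pH n ?s b c"
  have nk: "n - 1 - ?s = n - k" using k by simp
  show ?thesis
  proof (cases "i < ?s")
    case True
    have "(\<Sum>j<n. if H_graph n k i j then ?p j else 0) = (\<Sum>j<n. if j \<noteq> i then ?p j else 0)"
      using True k i by (intro sum.cong) (auto simp: H_graph_def)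
    also have "\<dots> = (\<Sum>j<n. ?p j) - ?p i" by (rule sum_remove_pt[OF i])
    also have "\<dots> = real (k - 1) - 1 + real (n - k) * b + c"
      using sum_pH_n[of ?s n b c] k True by (simp add: pH_def nk)
    finally show ?thesis using True by simp
  next
    case False
    show ?thesis
    proof (cases "i < n - 1")
      case True
      have "(\<Sum>j<n. if H_graph n k i j then ?p j else 0) =
            (\<Sum>j<n. if j < n - 1 then (if j \<noteq> i then ?p j else 0) else 0)"
        using True False k i by (intro sum.cong) (auto simp: H_graph_def)
      also have "\<dots> = (\<Sum>j<n - 1. if j \<noteq> i then ?p j else 0)"
        by (intro sum.mono_neutral_cong_right) auto
      also have "\<dots> = (\<Sum>j<n - 1. ?p j) - ?p i" by (rule sum_remove_pt[OF True])
      also have "\<dots> = real (k - 1) + (real (n - k) - 1) * b"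
        using sum_pH_n1[of ?s n b c] k True False by (simp add: pH_def nk algebra_simps)
      finally show ?thesis using True False by simp
    next
      case False2: False
      then have iv: "i = n - 1" using i by simp
      have "(\<Sum>j<n. if H_graph n k i j then ?p j else 0) = (\<Sum>j<n. if j < ?s then 1 else 0)"
        using iv k by (intro sum.cong) (auto simp: H_graph_def pH_def)
      also have "\<dots> = (\<Sum>j<?s. 1)"
        using k by (intro sum.mono_neutral_cong_right) auto
      also have "\<dots> = real (k - 1)" by simp
      finally show ?thesis using False False2 by simp
    qed
  qed
qed


lemma H_eig_ivt:
  fixes S T :: real
  assumes S: "S \<ge> 1" and T: "T \<ge> 1" and ST: "S + T \<ge> 2"
  shows "\<exists>x. x > S + T - 1 \<and> x \<le> S + T \<and>
     x - (S - 1) - T * S / (x - T + 1) - S / x = 0"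
proof -
  define f where "f x = x - (S - 1) - T * S / (x - T + 1) - S / x" for x
  have c: "continuous_on {S + T - 1 .. S + T} f"
    unfolding f_def using S T ST
    by (intro continuous_intros) (auto simp: field_simps)
  have fa: "f (S + T - 1) < 0"
  proof -
    have "f (S + T - 1) = T - T * S / S - S / (S + T - 1)" unfolding f_def by (simp add: algebra_simps)
    also have "T * S / S = T" using S by simp
    finally show ?thesis using S T ST by simp
  qed
  have fb: "f (S + T) > 0"
  proof -
    have "f (S + T) = T + 1 - T * S / (S + 1) - S / (S + T)" unfolding f_def by (simp add: algebra_simps)
    also have "\<dots> = (S + T + 1) / (S + 1) - S / (S + T)" using S by (simp add: field_simps)
    finally have e: "f (S + T) = (S + T + 1) / (S + 1) - S / (S + T)" .
    have "S / (S + T) < 1" using S T by simp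
    moreover have "(S + T + 1) / (S + 1) \<ge> 1" using S T by (auto simp: field_simps)
    ultimately show ?thesis using e by auto
  qed
  obtain x where x: "S + T - 1 \<le> x" "x \<le> S + T" "f x = 0"
    using IVT'[of f "S + T - 1" 0 "S + T"] fa fb c by auto
  have "x \<noteq> S + T - 1" using x(3) fa by auto
  then have "x > S + T - 1" using x(1) by simp
  then show ?thesis using x unfolding f_def by blast
qed

lemma H_eig:
  assumes k: "1 \<le> k" "k < n" and n3: "3 \<le> n"
  shows "\<exists>mu b c. mu \<ge> real n - 2 \<and> (2 \<le> k \<longrightarrow> mu > real n - 2) \<and> b > 0 \<and> c \<ge> 0 \<and>
     (2 \<le> k \<longrightarrow> c > 0) \<and>
     (\<forall>i<n. (\<Sum>j<n. if H_graph n k i j then pH n (k - 1) b c j else 0) = mu * pH n (k - 1) b c i)"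
proof (cases "k = 1")
  case True
  show ?thesis
  proof (intro exI conjI allI impI)
    fix i assume i: "i < n"
    show "(\<Sum>j<n. if H_graph n k i j then pH n (k - 1) 1 0 j else 0) = (real n - 2) * pH n (k - 1) 1 0 i"
      using H_row[OF k i, of 1 0] True k i by (auto simp: pH_def of_nat_diff)
  qed (use True in auto)
next
  case False
  then have k2: "k \<ge> 2" using k by simp
  define S where "S = real (k - 1)"
  define T where "T = real (n - k)"
  have S1: "S \<ge> 1" unfolding S_def using k2 by simp
  have T0: "T \<ge> 1" unfolding T_def using k by simp
  have nST: "real n = S + T + 1" unfolding S_def T_def using k by (simp add: of_nat_diff)
  obtain x where x: "x > S + T - 1" "x \<le> S + T" "x - (S - 1) - T * S / (x - T + 1) - S / x = 0"
    using H_eig_ivt[OF S1 T0] nST n3 by auto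
  have xT: "x - T + 1 > 0" using x S1 by simp
  have x0: "x > 0" using x S1 T0 by simp
  define b where "b = S / (x - T + 1)"
  define c where "c = S / x"
  have b0: "b > 0" unfolding b_def using xT S1 by simp
  have c0: "c > 0" unfolding c_def using x0 S1 by simp
  show ?thesis
  proof (intro exI conjI allI impI)
    show "x \<ge> real n - 2" "x > real n - 2" using x nST by auto
    fix i assume i: "i < n"
    have rowi: "(\<Sum>j<n. if H_graph n k i j then pH n (k - 1) b c j else 0) =
     (if i < k - 1 then S - 1 + T * b + c
      else if i < n - 1 then S + (T - 1) * b else S)"
      using H_row[OF k i, of b c] unfolding S_def T_def by simp
    show "(\<Sum>j<n. if H_graph n k i j then pH n (k - 1) b c j else 0) = x * pH n (k - 1) b c i"
    proof -
      have e1: "S - 1 + T * b + c = x"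
        using x(3) unfolding b_def c_def by (simp add: algebra_simps)
      have e2: "S + (T - 1) * b = x * b"
        using xT unfolding b_def by (simp add: field_simps)
      have e3: "S = x * c" using x0 unfolding c_def by simp
      show ?thesis using e1 e2 e3 rowi unfolding pH_def by auto
    qed
  qed (use b0 c0 in auto)
qed


lemma spec_rad_props:
  assumes "n > 0" "\<forall>i j. E i j \<longrightarrow> E j i"
  shows "eigenvalue (adj_matrix n E) (spec_rad n E)"
    "\<And>l. eigenvalue (adj_matrix n E) l \<Longrightarrow> l \<le> spec_rad n E"
proof -
  have ne: "{x. eigenvalue (adj_matrix n E) x} \<noteq> {}" using eig_exists[OF assms] by auto
  show "eigenvalue (adj_matrix n E) (spec_rad n E)"
    unfolding spec_rad_def using Max_in[OF eig_finite ne] by simp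
  show "\<And>l. eigenvalue (adj_matrix n E) l \<Longrightarrow> l \<le> spec_rad n E"
    unfolding spec_rad_def using eig_finite by (intro Max_ge) auto
qed

definition Hp :: "nat \<Rightarrow> nat \<Rightarrow> (nat \<Rightarrow> nat) \<Rightarrow> nat \<Rightarrow> nat \<Rightarrow> bool" where
  "Hp n k \<pi> i j = H_graph n k (\<pi> i) (\<pi> j)"

lemma H_sym: "H_graph n k i j \<Longrightarrow> H_graph n k j i"
  unfolding H_graph_def by auto

lemma Hp_bound:
  assumes k: "1 \<le> k" "k < n" and n3: "3 \<le> n"
    and mu: "mu \<ge> real n - 2" and b: "b > 0" and c: "c \<ge> 0" "2 \<le> k \<longrightarrow> c > 0"
    and eq: "\<forall>i<n. (\<Sum>j<n. if H_graph n k i j then pH n (k - 1) b c j else 0) = mu * pH n (k - 1) b c i"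
    and pi: "bij_betw \<pi> {..<n} {..<n}"
  shows "Q (Hp n k \<pi>) n z + (\<Sum>i<n. \<Sum>j<n. if Hp n k \<pi> i j then
      (z i * pH n (k - 1) b c (\<pi> j) - z j * pH n (k - 1) b c (\<pi> i))^2 /
        (2 * pH n (k - 1) b c (\<pi> i) * pH n (k - 1) b c (\<pi> j)) else 0) \<le> mu * nrm n z"
proof -
  let ?p = "\<lambda>i. pH n (k - 1) b c (\<pi> i)"
  have pin: "i < n \<Longrightarrow> \<pi> i < n" for i using pi by (auto simp: bij_betw_def)
  show ?thesis
  proof (rule test_vector_bound[where p = ?p])
    show "Hp n k \<pi> j i" if "Hp n k \<pi> i j" for i j using that H_sym unfolding Hp_def by blast
    show "?p i > 0" if "i < n" "j < n" "Hp n k \<pi> i j" for i j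
      using that b c unfolding Hp_def H_graph_def pH_def by auto
    show "(\<Sum>j<n. if Hp n k \<pi> i j then ?p j else 0) \<le> mu * ?p i" if "i < n" "?p i > 0" for i
    proof -
      have "(\<Sum>j<n. if Hp n k \<pi> i j then ?p j else 0) =
            (\<Sum>j<n. (\<lambda>j'. if H_graph n k (\<pi> i) j' then pH n (k - 1) b c j' else 0) (\<pi> j))"
        unfolding Hp_def by simp
      also have "\<dots> = (\<Sum>j'<n. if H_graph n k (\<pi> i) j' then pH n (k - 1) b c j' else 0)"
        by (rule sum.reindex_bij_betw[OF pi])
      also have "\<dots> = mu * ?p i" using eq pin[OF that(1)] by simp
      finally show ?thesis by simp
    qed
    show "mu \<ge> 0" using mu n3 by simp
  qed
qed


lemma Hp_id: "Hp n k id = H_graph n k" unfolding Hp_def by (intro ext) simp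

lemma double_sum_nonneg_zero:
  fixes f :: "nat \<Rightarrow> nat \<Rightarrow> real"
  assumes "\<And>i j. i < n \<Longrightarrow> j < n \<Longrightarrow> f i j \<ge> 0" "(\<Sum>i<n. \<Sum>j<n. f i j) \<le> 0"
    "i < n" "j < n"
  shows "f i j = 0"
proof -
  have inner: "(\<Sum>j<n. f i j) \<ge> 0" if "i < n" for i using assms(1) that by (intro sum_nonneg) auto
  have "0 \<le> (\<Sum>i<n. \<Sum>j<n. f i j)" by (rule sum_nonneg) (use inner in auto)
  then have "(\<Sum>i<n. \<Sum>j<n. f i j) = 0" using assms(2) by linarith
  then have "(\<Sum>j<n. f i j) = 0" using inner assms(3) by (subst (asm) sum_nonneg_eq_0_iff) auto
  then show ?thesis using assms(1,3,4) by (subst (asm) sum_nonneg_eq_0_iff) auto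
qed

lemma H_pkg:
  assumes k: "1 \<le> k" "k < n" and n3: "3 \<le> n"
  shows "\<exists>mu. spec_rad n (H_graph n k) = mu \<and> mu \<ge> real n - 2 \<and> (2 \<le> k \<longrightarrow> mu > real n - 2) \<and>
    (\<forall>\<pi> z. bij_betw \<pi> {..<n} {..<n} \<longrightarrow> Q (Hp n k \<pi>) n z \<le> mu * nrm n z) \<and>
    (\<forall>\<pi> z. bij_betw \<pi> {..<n} {..<n} \<longrightarrow> (\<exists>i<n. z i \<noteq> 0) \<longrightarrow> Q (Hp n k \<pi>) n z = mu * nrm n z \<longrightarrow>
        (\<forall>i<n. \<forall>j<n. Hp n k \<pi> i j \<longrightarrow> z i \<noteq> 0 \<and> z j \<noteq> 0))"
proof -
  obtain mu b c where mu: "mu \<ge> real n - 2" "2 \<le> k \<longrightarrow> mu > real n - 2" and b: "b > 0" and c: "c \<ge> 0" "2 \<le> k \<longrightarrow> c > 0"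
    and eq: "\<forall>i<n. (\<Sum>j<n. if H_graph n k i j then pH n (k - 1) b c j else 0) = mu * pH n (k - 1) b c i"
    using H_eig[OF k n3] by blast
  let ?p = "pH n (k - 1) b c"
  have bound: "Q (Hp n k \<pi>) n z + (\<Sum>i<n. \<Sum>j<n. if Hp n k \<pi> i j then
      (z i * ?p (\<pi> j) - z j * ?p (\<pi> i))^2 / (2 * ?p (\<pi> i) * ?p (\<pi> j)) else 0) \<le> mu * nrm n z"
    if "bij_betw \<pi> {..<n} {..<n}" for \<pi> z
    using Hp_bound[OF k n3 mu(1) b c eq that] .
  have ppos: "Hp n k \<pi> i j \<Longrightarrow> ?p (\<pi> i) > 0" for \<pi> i j
    using b c unfolding Hp_def H_graph_def pH_def by auto
  have gap_nonneg: "(if Hp n k \<pi> i j then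
      (z i * ?p (\<pi> j) - z j * ?p (\<pi> i))^2 / (2 * ?p (\<pi> i) * ?p (\<pi> j)) else 0) \<ge> 0" for \<pi> z i j
    using ppos[of \<pi> i j] ppos[of \<pi> j i] H_sym unfolding Hp_def by auto
  have Qle: "Q (Hp n k \<pi>) n z \<le> mu * nrm n z" if "bij_betw \<pi> {..<n} {..<n}" for \<pi> z
  proof -
    have "0 \<le> (\<Sum>i<n. \<Sum>j<n. if Hp n k \<pi> i j then
      (z i * ?p (\<pi> j) - z j * ?p (\<pi> i))^2 / (2 * ?p (\<pi> i) * ?p (\<pi> j)) else 0)"
      using gap_nonneg by (intro sum_nonneg) auto
    then show ?thesis using bound[OF that, of z] by linarith
  qed
  have spec: "spec_rad n (H_graph n k) = mu"
  proof -
    have ev: "eigenvalue (adj_matrix n (H_graph n k)) mu"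
      unfolding eig_iff
    proof (intro exI[of _ ?p] conjI)
      show "\<exists>i<n. ?p i \<noteq> 0" using b n3 by (intro exI[of _ 0]) (auto simp: pH_def)
    qed (use eq in auto)
    have "l \<le> mu" if evl: "eigenvalue (adj_matrix n (H_graph n k)) l" for l
    proof -
      obtain y where y: "\<exists>i<n. y i \<noteq> 0" "l * nrm n y \<le> Q (H_graph n k) n y"
        using eig_vec[OF evl] by blast
      have "Q (H_graph n k) n y \<le> mu * nrm n y" using Qle[of id y] Hp_id by simp
      then have "l * nrm n y \<le> mu * nrm n y" using y(2) by linarith
      then show ?thesis using nrm_pos[OF y(1)] by simp
    qed
    then show ?thesis unfolding spec_rad_def using ev eig_finite by (intro Max_eqI) auto
  qed
  have eqcase: "\<forall>i<n. \<forall>j<n. Hp n k \<pi> i j \<longrightarrow> z i \<noteq> 0 \<and> z j \<noteq> 0"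
    if pi: "bij_betw \<pi> {..<n} {..<n}" and nz: "\<exists>i<n. z i \<noteq> 0" and Qeq: "Q (Hp n k \<pi>) n z = mu * nrm n z"
    for \<pi> z
  proof (rule ccontr)
    assume "\<not> ?thesis"
    then obtain i0 j0 where ij0: "i0 < n" "j0 < n" "Hp n k \<pi> i0 j0" "z i0 = 0 \<or> z j0 = 0" by blast
    have pin: "i < n \<Longrightarrow> \<pi> i < n" for i using pi by (auto simp: bij_betw_def)
    have inj: "i < n \<Longrightarrow> j < n \<Longrightarrow> \<pi> i = \<pi> j \<Longrightarrow> i = j" for i j
      using pi unfolding bij_betw_def inj_on_def by auto
    have surj: "m < n \<Longrightarrow> \<exists>i<n. \<pi> i = m" for m
      using pi unfolding bij_betw_def by (metis imageE lessThan_iff)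
    have gap0: "(\<Sum>i<n. \<Sum>j<n. if Hp n k \<pi> i j then
      (z i * ?p (\<pi> j) - z j * ?p (\<pi> i))^2 / (2 * ?p (\<pi> i) * ?p (\<pi> j)) else 0) \<le> 0"
      using bound[OF pi, of z] Qeq by linarith
    have zprop: "z i = 0 \<longleftrightarrow> z j = 0" if "i < n" "j < n" "Hp n k \<pi> i j" for i j
    proof -
      have "(if Hp n k \<pi> i j then
        (z i * ?p (\<pi> j) - z j * ?p (\<pi> i))^2 / (2 * ?p (\<pi> i) * ?p (\<pi> j)) else 0) = 0"
        by (rule double_sum_nonneg_zero[OF _ gap0 that(1,2)]) (rule gap_nonneg)
      moreover have pi0: "?p (\<pi> i) > 0" using ppos that(3) by blast
      moreover have pj0: "?p (\<pi> j) > 0" using ppos[of \<pi> j i] that(3) H_sym unfolding Hp_def by blast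
      ultimately have "z i * ?p (\<pi> j) = z j * ?p (\<pi> i)" using that(3) by simp
      then show ?thesis using pi0 pj0 by auto
    qed
    have cl_edge: "Hp n k \<pi> i j" if "i < n" "j < n" "\<pi> i < n - 1" "\<pi> j < n - 1" "i \<noteq> j" for i j
      using that inj pin unfolding Hp_def H_graph_def by auto
    obtain i1 where i1: "i1 < n" "\<pi> i1 < n - 1" "z i1 = 0"
    proof -
      have "z i0 = 0" "z j0 = 0" using zprop[OF ij0(1-3)] ij0(4) by auto
      moreover have "\<pi> i0 < n - 1 \<or> \<pi> j0 < n - 1"
        using ij0(3) unfolding Hp_def H_graph_def by auto
      ultimately show ?thesis using that ij0 by auto
    qed
    have clz: "z j = 0" if "j < n" "\<pi> j < n - 1" for j
      using zprop[OF i1(1) that(1) cl_edge[OF i1(1) that(1) i1(2) that(2)]] i1 by (cases "j = i1") auto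
    show False
    proof (cases "2 \<le> k")
      case True
      obtain w where w: "w < n" "\<pi> w = n - 1" using surj[of "n - 1"] n3 by auto
      obtain w0 where w0: "w0 < n" "\<pi> w0 = 0" using surj[of 0] n3 by auto
      have "Hp n k \<pi> w w0" using w w0 True n3 unfolding Hp_def H_graph_def by auto
      then have "z w = 0" using zprop[OF w(1) w0(1)] clz[OF w0(1)] w0 n3 by auto
      then have "z i = 0" if "i < n" for i
        using clz[OF that] inj[OF that w(1)] w pin[OF that] by (cases "\<pi> i < n - 1") auto
      then show False using nz by auto
    next
      case False
      then have k1: "k = 1" using k by simp
      have "Q (Hp n k \<pi>) n z = 0" unfolding Q_def
      proof (intro sum.neutral ballI)
        fix i j assume "i \<in> {..<n}" "j \<in> {..<n}"
        then show "(if Hp n k \<pi> i j then z i * z j else 0) = 0"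
          using clz pin k1 unfolding Hp_def H_graph_def by auto
      qed
      then have "mu * nrm n z = 0" using Qeq by simp
      moreover have "mu > 0" using mu n3 by simp
      ultimately show False using nrm_pos[OF nz] by simp
    qed
  qed
  show ?thesis using spec mu Qle eqcase by blast
qed


lemma iso_eig:
  assumes iso: "graph_iso n G H" and ev: "eigenvalue (adj_matrix n H) l"
  shows "eigenvalue (adj_matrix n G) l"
proof -
  obtain f where f: "bij_betw f {..<n} {..<n}" "\<forall>i<n. \<forall>j<n. G i j \<longleftrightarrow> H (f i) (f j)"
    using iso unfolding graph_iso_def by blast
  obtain v where v: "\<exists>i<n. v i \<noteq> 0" "\<forall>i<n. (\<Sum>j<n. if H i j then v j else 0) = l * v i"
    using ev unfolding eig_iff by blast
  have fin: "i < n \<Longrightarrow> f i < n" for i using f(1) by (auto simp: bij_betw_def)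
  show ?thesis unfolding eig_iff
  proof (intro exI[of _ "\<lambda>i. v (f i)"] conjI allI impI)
    obtain i0 where i0: "i0 < n" "v i0 \<noteq> 0" using v(1) by auto
    then obtain j0 where "j0 < n" "f j0 = i0" using f(1) unfolding bij_betw_def
      by (metis imageE lessThan_iff)
    then show "\<exists>i<n. v (f i) \<noteq> 0" using i0 by auto
    fix i assume i: "i < n"
    have "(\<Sum>j<n. if G i j then v (f j) else 0) = (\<Sum>j<n. (\<lambda>j'. if H (f i) j' then v j' else 0) (f j))"
      using f(2) i by (intro sum.cong) auto
    also have "\<dots> = (\<Sum>j'<n. if H (f i) j' then v j' else 0)" by (rule sum.reindex_bij_betw[OF f(1)])
    also have "\<dots> = l * v (f i)" using v(2) fin[OF i] by simp
    finally show "(\<Sum>j<n. if G i j then v (f j) else 0) = l * v (f i)" .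
  qed
qed

lemma iso_sym:
  assumes iso: "graph_iso n G H"
  shows "graph_iso n H G"
proof -
  obtain f where f: "bij_betw f {..<n} {..<n}" "\<forall>i<n. \<forall>j<n. G i j \<longleftrightarrow> H (f i) (f j)"
    using iso unfolding graph_iso_def by blast
  define g where "g = the_inv_into {..<n} f"
  have g: "bij_betw g {..<n} {..<n}" unfolding g_def by (rule bij_betw_the_inv_into[OF f(1)])
  have fi: "inj_on f {..<n}" "f ` {..<n} = {..<n}" using f(1) unfolding bij_betw_def by auto
  have fg: "a < n \<Longrightarrow> f (g a) = a" for a unfolding g_def
    using fi by (intro f_the_inv_into_f) auto
  have gin: "a < n \<Longrightarrow> g a < n" for a using g by (auto simp: bij_betw_def)
  have "\<forall>a<n. \<forall>b<n. H a b \<longleftrightarrow> G (g a) (g b)"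
    using f(2) fg gin by metis
  then show ?thesis unfolding graph_iso_def using g by blast
qed

lemma iso_spec_rad:
  assumes "graph_iso n G H"
  shows "spec_rad n G = spec_rad n H"
proof -
  have "{x. eigenvalue (adj_matrix n G) x} = {x. eigenvalue (adj_matrix n H) x}"
    using iso_eig[OF assms] iso_eig[OF iso_sym[OF assms]] by blast
  then show ?thesis unfolding spec_rad_def by simp
qed

lemma relabel:
  assumes v: "v < n" and N: "N \<subseteq> {..<n} - {v}" and cN: "card N \<le> m" and m: "m \<le> n - 1"
  shows "\<exists>\<pi>. bij_betw \<pi> {..<n} {..<n} \<and> \<pi> v = n - 1 \<and> \<pi> ` N \<subseteq> {..<m}"
proof -
  define d where "d = card N"
  define R where "R = {..<n} - {v} - N"
  have finN: "finite N" using N finite_subset by blast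
  have cR: "card R = n - 1 - d"
  proof -
    have "card ({..<n} - {v}) = n - 1" using v by simp
    moreover have "card ({..<n} - {v} - N) = card ({..<n} - {v}) - card N"
      using N finN by (intro card_Diff_subset) auto
    ultimately show ?thesis unfolding R_def d_def by simp
  qed
  obtain f1 where f1: "bij_betw f1 N {..<d}"
    using finN unfolding d_def by (metis finite_same_card_bij finite_lessThan card_lessThan)
  obtain f2 where f2: "bij_betw f2 R {d..<n - 1}"
    using cR by (metis R_def card_atLeastLessThan finite_Diff finite_atLeastLessThan finite_lessThan finite_same_card_bij)
  define \<pi> where "\<pi> x = (if x = v then n - 1 else if x \<in> N then f1 x else f2 x)" for x
  have b1: "bij_betw \<pi> {v} {n - 1}" unfolding \<pi>_def by (simp add: bij_betw_def)
  have b2: "bij_betw \<pi> N {..<d}" using f1 N unfolding \<pi>_def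
    by (subst bij_betw_cong[where g = f1]) auto
  have b3: "bij_betw \<pi> R {d..<n - 1}" using f2 unfolding \<pi>_def R_def
    by (subst bij_betw_cong[where g = f2]) auto
  have dn: "d \<le> n - 1" unfolding d_def using cN m by simp
  have b23: "bij_betw \<pi> (N \<union> R) ({..<d} \<union> {d..<n - 1})"
    by (rule bij_betw_combine[OF b2 b3]) (auto simp: R_def)
  have b123: "bij_betw \<pi> ({v} \<union> (N \<union> R)) ({n - 1} \<union> ({..<d} \<union> {d..<n - 1}))"
    by (rule bij_betw_combine[OF b1 b23]) (use N dn in \<open>auto simp: R_def\<close>)
  have e1: "{v} \<union> (N \<union> R) = {..<n}" using N v unfolding R_def by auto
  have e2: "{n - 1} \<union> ({..<d} \<union> {d..<n - 1}) = {..<n}" using dn v by auto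
  have "\<pi> ` N \<subseteq> {..<m}" using b2 cN unfolding bij_betw_def d_def by auto
  then show ?thesis using b123 e1 e2 by (intro exI[of _ \<pi>]) (auto simp: \<pi>_def)
qed


lemma Hp_contains:
  assumes pi: "bij_betw \<pi> {..<n} {..<n}" and pv: "\<pi> v = n - 1" and pN: "\<pi> ` N \<subseteq> {..<k - 1}"
    and v: "v < n" and ij: "i < n" "j < n" "i \<noteq> j"
    and c: "(i \<noteq> v \<and> j \<noteq> v) \<or> (i = v \<and> j \<in> N) \<or> (j = v \<and> i \<in> N)"
  shows "Hp n k \<pi> i j"
proof -
  have pin: "x < n \<Longrightarrow> \<pi> x < n" for x using pi by (auto simp: bij_betw_def)
  have inj: "x < n \<Longrightarrow> y < n \<Longrightarrow> \<pi> x = \<pi> y \<Longrightarrow> x = y" for x y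
    using pi unfolding bij_betw_def inj_on_def by auto
  have "\<pi> i \<noteq> \<pi> j" using inj ij by blast
  moreover have "x < n \<Longrightarrow> x \<noteq> v \<Longrightarrow> \<pi> x < n - 1" for x
    using inj[of x v] pin[of x] pv v by fastforce
  ultimately show ?thesis using c pin ij pN pv unfolding Hp_def H_graph_def by auto
qed

lemma double_sum_ge_term:
  fixes f :: "nat \<Rightarrow> nat \<Rightarrow> real"
  assumes "\<And>i j. i < n \<Longrightarrow> j < n \<Longrightarrow> f i j \<ge> 0" "i < n" "j < n"
  shows "f i j \<le> (\<Sum>i<n. \<Sum>j<n. f i j)"
proof -
  have "f i j \<le> (\<Sum>j<n. f i j)" using assms by (intro member_le_sum) auto
  also have "\<dots> \<le> (\<Sum>i<n. \<Sum>j<n. f i j)"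
    using assms by (intro member_le_sum[of i] sum_nonneg) auto
  finally show ?thesis .
qed

lemma Q_mono:
  assumes "\<And>i j. i < n \<Longrightarrow> j < n \<Longrightarrow> E i j \<Longrightarrow> E' i j" "\<And>i. y i \<ge> 0"
  shows "Q E n y \<le> Q E' n y"
  unfolding Q_def using assms by (intro sum_mono) auto

lemma sgraph_sym: "sgraph n G \<Longrightarrow> \<forall>i j. G i j \<longrightarrow> G j i"
  unfolding sgraph_def by blast

lemma caseA:
  assumes sg: "sgraph n G" and k: "1 \<le> k" "k < n" and n3: "3 \<le> n" and v: "v < n"
    and dv: "degree n G v < k"
  shows "spec_rad n G \<le> spec_rad n (H_graph n k) \<and>
    (spec_rad n G = spec_rad n (H_graph n k) \<longrightarrow> graph_iso n G (H_graph n k))"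
proof -
  define N where "N = {j. j < n \<and> G v j}"
  have N: "N \<subseteq> {..<n} - {v}" using sg unfolding N_def sgraph_def by auto
  have cN: "card N \<le> k - 1" using dv unfolding N_def degree_def by simp
  obtain \<pi> where pi: "bij_betw \<pi> {..<n} {..<n}" "\<pi> v = n - 1" "\<pi> ` N \<subseteq> {..<k - 1}"
  proof -
    have "k - 1 \<le> n - 1" using k by simp
    then show ?thesis using relabel[OF v N cN] that by blast
  qed
  have GH: "Hp n k \<pi> i j" if "i < n" "j < n" "G i j" for i j
  proof (rule Hp_contains[OF pi v that(1,2)])
    show "i \<noteq> j" using sg that unfolding sgraph_def by auto
    show "(i \<noteq> v \<and> j \<noteq> v) \<or> (i = v \<and> j \<in> N) \<or> (j = v \<and> i \<in> N)"
      using that sg unfolding N_def sgraph_def by auto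
  qed
  obtain mu where mu: "spec_rad n (H_graph n k) = mu" "mu \<ge> real n - 2"
    "\<forall>\<pi> z. bij_betw \<pi> {..<n} {..<n} \<longrightarrow> Q (Hp n k \<pi>) n z \<le> mu * nrm n z"
    "\<forall>\<pi> z. bij_betw \<pi> {..<n} {..<n} \<longrightarrow> (\<exists>i<n. z i \<noteq> 0) \<longrightarrow> Q (Hp n k \<pi>) n z = mu * nrm n z \<longrightarrow>
        (\<forall>i<n. \<forall>j<n. Hp n k \<pi> i j \<longrightarrow> z i \<noteq> 0 \<and> z j \<noteq> 0)"
    using H_pkg[OF k n3] by blast
  have n0: "n > 0" using n3 by simp
  let ?l = "spec_rad n G"
  obtain y where y: "\<forall>i. y i \<ge> 0" "\<exists>i<n. y i \<noteq> 0" "?l * nrm n y \<le> Q G n y"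
    using eig_vec[OF spec_rad_props(1)[OF n0 sgraph_sym[OF sg]]] by blast
  have QGH: "Q G n y \<le> Q (Hp n k \<pi>) n y" using GH y(1) by (intro Q_mono) auto
  have QH: "Q (Hp n k \<pi>) n y \<le> mu * nrm n y" using mu(3) pi(1) by blast
  have np: "nrm n y > 0" using nrm_pos[OF y(2)] .
  have le: "?l \<le> mu"
  proof -
    have "?l * nrm n y \<le> mu * nrm n y" using y(3) QGH QH by linarith
    then show ?thesis using np by simp
  qed
  moreover have "?l = mu \<longrightarrow> graph_iso n G (H_graph n k)"
  proof
    assume eq: "?l = mu"
    then have Qe: "Q (Hp n k \<pi>) n y = mu * nrm n y" and Qe2: "Q G n y = Q (Hp n k \<pi>) n y"
      using y(3) QGH QH by auto
    have nz: "\<forall>i<n. \<forall>j<n. Hp n k \<pi> i j \<longrightarrow> y i \<noteq> 0 \<and> y j \<noteq> 0"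
      using mu(4) pi(1) y(2) Qe by blast
    have HG: "G i j" if "i < n" "j < n" "Hp n k \<pi> i j" for i j
    proof (rule ccontr)
      assume nG: "\<not> G i j"
      define f where "f a b = (if Hp n k \<pi> a b then y a * y b else 0) - (if G a b then y a * y b else 0)" for a b
      have f0: "f a b \<ge> 0" if "a < n" "b < n" for a b
        using GH[OF that] y(1) unfolding f_def by (auto intro: mult_nonneg_nonneg)
      have "y i > 0" "y j > 0" using nz that y(1) by (auto simp: less_eq_real_def)
      then have "f i j > 0" using nG that unfolding f_def by simp
      also have "f i j \<le> (\<Sum>a<n. \<Sum>b<n. f a b)" by (rule double_sum_ge_term[OF f0 that(1,2)])
      also have "\<dots> = Q (Hp n k \<pi>) n y - Q G n y"
        unfolding f_def Q_def by (simp add: sum_subtractf)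
      finally show False using Qe2 by simp
    qed
    have "\<forall>i<n. \<forall>j<n. G i j \<longleftrightarrow> H_graph n k (\<pi> i) (\<pi> j)"
      using GH HG unfolding Hp_def by blast
    then show "graph_iso n G (H_graph n k)" unfolding graph_iso_def using pi(1) by blast
  qed
  ultimately show ?thesis using mu(1) by simp
qed


definition kd :: "nat \<Rightarrow> (nat \<Rightarrow> nat \<Rightarrow> bool) \<Rightarrow> nat \<Rightarrow> nat" where
  "kd n G u = card {w. w < n \<and> w \<noteq> u \<and> \<not> G u w}"

lemma row_split:
  assumes sg: "sgraph n G" and i: "i < n"
  shows "(\<Sum>j<n. if G i j then y j else 0) + y i + (\<Sum>j<n. if j \<noteq> i \<and> \<not> G i j then y j else (0::real))
         = (\<Sum>j<n. y j)"
proof -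
  have "(\<Sum>j<n. y j) = (\<Sum>j<n. (if G i j then y j else 0) + (if j = i then y j else 0) +
           (if j \<noteq> i \<and> \<not> G i j then y j else 0))"
    using sg unfolding sgraph_def by (intro sum.cong) auto
  also have "\<dots> = (\<Sum>j<n. if G i j then y j else 0) + (\<Sum>j<n. if j = i then y j else 0) +
           (\<Sum>j<n. if j \<noteq> i \<and> \<not> G i j then y j else 0)" by (simp add: sum.distrib)
  also have "(\<Sum>j<n. if j = i then y j else 0) = y i" using i by simp
  finally show ?thesis by simp
qed

lemma kd_sum_swap:
  assumes sg: "sgraph n G"
  shows "(\<Sum>i<n. \<Sum>j<n. if j \<noteq> i \<and> \<not> G i j then y j else (0::real)) = (\<Sum>j<n. real (kd n G j) * y j)"
proof -
  have "(\<Sum>i<n. \<Sum>j<n. if j \<noteq> i \<and> \<not> G i j then y j else (0::real)) =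
        (\<Sum>j<n. \<Sum>i<n. if j \<noteq> i \<and> \<not> G i j then y j else (0::real))" by (rule sum.swap)
  also have "\<dots> = (\<Sum>j<n. real (kd n G j) * y j)"
  proof (intro sum.cong refl)
    fix j assume j: "j \<in> {..<n}"
    have "(\<Sum>i<n. if j \<noteq> i \<and> \<not> G i j then y j else (0::real)) =
          (\<Sum>i\<in>{w. w < n \<and> w \<noteq> j \<and> \<not> G j w}. y j)"
      using sg unfolding sgraph_def by (intro sum.mono_neutral_cong_right) auto
    then show "(\<Sum>i<n. if j \<noteq> i \<and> \<not> G i j then y j else (0::real)) = real (kd n G j) * y j"
      unfolding kd_def by simp
  qed
  finally show ?thesis .
qed

lemma two_le_sum:
  fixes f :: "nat \<Rightarrow> real"
  assumes "\<And>l. l < n \<Longrightarrow> f l \<ge> 0" "i < n" "j < n" "i \<noteq> j"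
  shows "f i + f j \<le> (\<Sum>l<n. f l)"
proof -
  have "f i + f j = (\<Sum>l\<in>{i, j}. f l)" using assms by simp
  also have "\<dots> \<le> (\<Sum>l<n. f l)" using assms by (intro sum_mono2) auto
  finally show ?thesis .
qed

locale specB =
  fixes n :: nat and G :: "nat \<Rightarrow> nat \<Rightarrow> bool" and lam :: real and y :: "nat \<Rightarrow> real"
  assumes sg: "sgraph n G" and n3: "n \<ge> 3" and lam: "lam \<ge> real n - 2"
    and ynn: "\<And>i. y i \<ge> 0" and ynz: "\<exists>i<n. y i \<noteq> 0"
    and sub: "\<And>i. i < n \<Longrightarrow> lam * y i \<le> (\<Sum>j<n. if G i j then y j else 0)"
begin

definition S where "S = (\<Sum>j<n. y j)"
definition s where "s = S / (real n - 1)"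

lemma star: "i < n \<Longrightarrow> (lam + 1) * y i + (\<Sum>j<n. if j \<noteq> i \<and> \<not> G i j then y j else 0) \<le> S"
  using sub[of i] row_split[OF sg, of i y] unfolding S_def by (simp add: algebra_simps)

lemma S_pos: "S > 0"
proof -
  obtain i where i: "i < n" "y i \<noteq> 0" using ynz by auto
  have "y i \<le> S" unfolding S_def using i ynn by (intro member_le_sum) auto
  then show ?thesis using i ynn[of i] by simp
qed

lemma s_pos: "s > 0" unfolding s_def using S_pos n3 by simp

lemma y_le_s: "i < n \<Longrightarrow> y i \<le> s"
proof -
  assume i: "i < n"
  have "(lam + 1) * y i \<le> S" using star[OF i] ynn
    by (smt (verit, del_insts) sum_nonneg)
  moreover have "(real n - 1) * y i \<le> (lam + 1) * y i" using lam ynn[of i] by (intro mult_right_mono) auto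
  ultimately have "(real n - 1) * y i \<le> S" by linarith
  then show "y i \<le> s" unfolding s_def using n3 by (simp add: field_simps)
qed

lemma pair_ge_s: "i < n \<Longrightarrow> j < n \<Longrightarrow> i \<noteq> j \<Longrightarrow> y i + y j \<ge> s"
proof -
  assume ij: "i < n" "j < n" "i \<noteq> j"
  have "(s - y i) + (s - y j) \<le> (\<Sum>l<n. s - y l)"
    using y_le_s ij by (intro two_le_sum) auto
  also have "\<dots> = real n * s - S" unfolding S_def by (simp add: sum_subtractf)
  also have "\<dots> = s" unfolding s_def using n3 by (simp add: field_simps)
  finally show ?thesis by simp
qed

lemma kd_weighted: "(\<Sum>j<n. real (kd n G j) * y j) \<le> S"
proof -
  have "(\<Sum>i<n. (lam + 1) * y i + (\<Sum>j<n. if j \<noteq> i \<and> \<not> G i j then y j else 0)) \<le> (\<Sum>i<n. S)"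
    using star by (intro sum_mono) auto
  then have "(lam + 1) * S + (\<Sum>j<n. real (kd n G j) * y j) \<le> real n * S"
    unfolding sum.distrib kd_sum_swap[OF sg] S_def by (simp add: sum_distrib_left)
  moreover have "(real n - 1) * S \<le> (lam + 1) * S" using lam S_pos by (intro mult_right_mono) auto
  ultimately show ?thesis by (simp add: algebra_simps)
qed

lemma kd_total: "(\<Sum>j<n. kd n G j) \<le> 3 * n"
proof -
  obtain js where js: "js < n" "\<forall>j<n. y js \<le> y j"
  proof -
    have "finite (y ` {..<n})" "y ` {..<n} \<noteq> {}" using n3 by (auto simp: lessThan_empty_iff)
    then have "Min (y ` {..<n}) \<in> y ` {..<n}" by (rule Min_in)
    then obtain js where "js < n" "y js = Min (y ` {..<n})" by auto
    then show ?thesis using that by (metis Min_le finite_imageI finite_lessThan imageI lessThan_iff)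
  qed
  have half: "y j \<ge> s / 2" if "j < n" "j \<noteq> js" for j
    using pair_ge_s[OF that(1) js(1) that(2)] js(2) that(1) by auto
  have kdle: "kd n G j \<le> n" for j unfolding kd_def
    by (rule order_trans[OF card_mono[of "{..<n}"]]) auto
  have pt: "real (kd n G j) \<le> (2 / s) * (real (kd n G j) * y j) + (if j = js then real n else 0)"
    if "j < n" for j
  proof (cases "j = js")
    case True
    have "0 \<le> 2 * (real (kd n G j) * y j) / s" using ynn[of j] s_pos by simp
    then show ?thesis using kdle[of j] True by simp
  next
    case False
    have "real (kd n G j) * 1 \<le> real (kd n G j) * (2 * y j / s)"
      using half[OF that False] s_pos by (intro mult_left_mono) (auto simp: field_simps)
    then show ?thesis using False by (simp add: field_simps)
  qed
  have "real (\<Sum>j<n. kd n G j) = (\<Sum>j<n. real (kd n G j))" by simp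
  also have "\<dots> \<le> (\<Sum>j<n. (2 / s) * (real (kd n G j) * y j) + (if j = js then real n else 0))"
    using pt by (intro sum_mono) auto
  also have "\<dots> = (2 / s) * (\<Sum>j<n. real (kd n G j) * y j) + real n"
    using js(1) by (simp add: sum.distrib sum_distrib_left)
  also have "\<dots> \<le> (2 / s) * S + real n" using kd_weighted s_pos
    by (intro add_right_mono mult_left_mono) auto
  also have "(2 / s) * S = 2 * (real n - 1)" unfolding s_def using S_pos n3 by (simp add: field_simps)
  finally have "real (\<Sum>j<n. kd n G j) \<le> 3 * real n" by simp
  then show ?thesis by linarith
qed

end


definition Mset :: "nat \<Rightarrow> (nat \<Rightarrow> nat \<Rightarrow> bool) \<Rightarrow> nat \<Rightarrow> (nat \<times> nat) set" where
  "Mset n G v0 = {(i, j). i < n \<and> j < n \<and> i \<noteq> j \<and> i \<noteq> v0 \<and> j \<noteq> v0 \<and> \<not> G i j}"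

lemma Mset_sub: "Mset n G v0 \<subseteq> {..<n} \<times> {..<n}" unfolding Mset_def by auto

lemma finite_Mset: "finite (Mset n G v0)"
  using Mset_sub by (rule finite_subset) auto

lemma dsum_set:
  fixes f :: "nat \<Rightarrow> nat \<Rightarrow> real"
  assumes "A \<subseteq> {..<n} \<times> {..<n}"
  shows "(\<Sum>i<n. \<Sum>j<n. if (i, j) \<in> A then f i j else 0) = (\<Sum>p\<in>A. f (fst p) (snd p))"
proof -
  have "(\<Sum>i<n. \<Sum>j<n. if (i, j) \<in> A then f i j else 0) =
        (\<Sum>p\<in>{..<n} \<times> {..<n}. if p \<in> A then f (fst p) (snd p) else 0)"
    by (subst sum.cartesian_product) (auto intro!: sum.cong)
  also have "\<dots> = (\<Sum>p\<in>({..<n} \<times> {..<n}) \<inter> A. f (fst p) (snd p))"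
    by (rule sum.inter_restrict[symmetric]) auto
  also have "({..<n} \<times> {..<n}) \<inter> A = A" using assms by auto
  finally show ?thesis .
qed

lemma dsum_row:
  fixes f :: "nat \<Rightarrow> nat \<Rightarrow> real"
  assumes "v0 < n" "C \<subseteq> {..<n}"
  shows "(\<Sum>i<n. \<Sum>j<n. if i = v0 \<and> j \<in> C then f i j else 0) = (\<Sum>j\<in>C. f v0 j)"
proof -
  have "(\<Sum>i<n. \<Sum>j<n. if i = v0 \<and> j \<in> C then f i j else 0) =
        (\<Sum>i<n. if i = v0 then (\<Sum>j<n. if j \<in> C then f v0 j else 0) else 0)"
    by (intro sum.cong) auto
  also have "\<dots> = (\<Sum>j<n. if j \<in> C then f v0 j else 0)" using assms by simp
  also have "\<dots> = (\<Sum>j\<in>{..<n} \<inter> C. f v0 j)"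
    by (rule sum.inter_restrict[symmetric]) auto
  also have "{..<n} \<inter> C = C" using assms by auto
  finally show ?thesis .
qed

locale specB2 = specB +
  fixes mu :: real and dl :: nat
  assumes dl: "1 \<le> dl" "dl < n" and mulam: "mu \<le> lam"
    and Qbound: "\<And>\<pi> z. bij_betw \<pi> {..<n} {..<n} \<Longrightarrow> Q (Hp n dl \<pi>) n z \<le> mu * nrm n z"
    and ray: "lam * nrm n y \<le> Q G n y"
begin

lemma move:
  assumes v0: "v0 < n" and dd: "dl \<le> degree n G v0" and d5: "5 * degree n G v0 \<le> n - 2"
  shows "card (Mset n G v0) \<le> 2 * (degree n G v0 - dl)"
proof (rule ccontr)
  assume "\<not> ?thesis"
  then have cM: "card (Mset n G v0) \<ge> 2 * (degree n G v0 - dl) + 1" by simp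
  define d where "d = degree n G v0"
  define NG where "NG = {j. j < n \<and> G v0 j}"
  have cNG: "card NG = d" unfolding NG_def d_def degree_def by simp
  define c where "c = d - dl + 1"
  have c1: "c \<ge> 1" and cd: "c \<le> d" using dd dl unfolding c_def d_def by auto
  obtain C where C: "C \<subseteq> NG" "card C = c" "finite C"
    using obtain_subset_with_card_n[of c NG] cd cNG by auto
  define N' where "N' = NG - C"
  have finNG: "finite NG" unfolding NG_def by simp
  have cN': "card N' = dl - 1" unfolding N'_def using C cNG dd finNG unfolding c_def d_def
    by (simp add: card_Diff_subset)
  have N'sub: "N' \<subseteq> {..<n} - {v0}" using sg unfolding N'_def NG_def sgraph_def by auto
  obtain \<pi> where pi: "bij_betw \<pi> {..<n} {..<n}" "\<pi> v0 = n - 1" "\<pi> ` N' \<subseteq> {..<dl - 1}"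
  proof -
    have "dl - 1 \<le> n - 1" using dl by simp
    then show ?thesis using relabel[OF v0 N'sub, of "dl - 1"] cN' that by auto
  qed
  have n2: "real n - 2 > 0" using n3 by simp
  have y0: "y v0 \<le> s / 5"
  proof -
    have "lam * y v0 \<le> (\<Sum>j<n. if G v0 j then y j else 0)" using sub[OF v0] .
    also have "\<dots> \<le> (\<Sum>j<n. if G v0 j then s else 0)" using y_le_s by (intro sum_mono) auto
    also have "\<dots> = real d * s"
    proof -
      have "(\<Sum>j<n. if G v0 j then s else 0) = (\<Sum>j<n. if j \<in> NG then s else 0)"
        unfolding NG_def by (intro sum.cong) auto
      also have "\<dots> = (\<Sum>j\<in>{..<n} \<inter> NG. s)" by (rule sum.inter_restrict[symmetric]) auto
      also have "{..<n} \<inter> NG = NG" unfolding NG_def by auto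
      finally show ?thesis using cNG by simp
    qed
    finally have a: "lam * y v0 \<le> real d * s" .
    have "(real n - 2) * y v0 \<le> lam * y v0" using lam ynn[of v0] by (intro mult_right_mono) auto
    moreover have "5 * real d \<le> real n - 2" using d5 n3 unfolding d_def by linarith
    moreover have "5 * real d * s \<le> (real n - 2) * s"
      using \<open>5 * real d \<le> real n - 2\<close> s_pos by (intro mult_right_mono) auto
    ultimately have "(real n - 2) * (5 * y v0) \<le> (real n - 2) * s"
      using a by linarith
    then show ?thesis using n2 by simp
  qed
  have yoth: "y i \<ge> 4 * s / 5" if "i < n" "i \<noteq> v0" for i
    using pair_ge_s[OF that(1) v0 that(2)] y0 by simp
  define M where "M = Mset n G v0"
  define g where "g i j = (if G i j then y i * y j else 0)" for i j
  define h where "h i j = (if Hp n dl \<pi> i j then y i * y j else 0)" for i j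
  define m where "m i j = (if (i, j) \<in> M then y i * y j else 0)" for i j
  define r1 where "r1 i j = (if i = v0 \<and> j \<in> C then y i * y j else 0)" for i j
  define r2 where "r2 i j = (if j = v0 \<and> i \<in> C then y i * y j else 0)" for i j
  have yy: "y i * y j \<ge> 0" for i j using ynn by simp
  have v0C: "v0 \<notin> C" using C sg unfolding NG_def sgraph_def by auto
  have pw: "g i j \<le> h i j - m i j + r1 i j + r2 i j" if ij: "i < n" "j < n" for i j
  proof (cases "(i, j) \<in> M")
    case True
    then have "Hp n dl \<pi> i j" using Hp_contains[OF pi v0 ij] unfolding M_def Mset_def by auto
    then show ?thesis using True yy unfolding g_def h_def m_def r1_def r2_def M_def Mset_def by auto
  next
    case False
    show ?thesis
    proof (cases "G i j")
      case True
      have ne: "i \<noteq> j" using True sg unfolding sgraph_def by auto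
      have "Hp n dl \<pi> i j \<or> (i = v0 \<and> j \<in> C) \<or> (j = v0 \<and> i \<in> C)"
      proof (cases "i = v0 \<or> j = v0")
        case False
        then show ?thesis using Hp_contains[OF pi v0 ij ne] by auto
      next
        case True
        then show ?thesis
        proof
          assume iv: "i = v0"
          then have "j \<in> NG" using \<open>G i j\<close> ij unfolding NG_def by auto
          then show ?thesis using Hp_contains[OF pi v0 ij ne] iv unfolding N'_def by auto
        next
          assume jv: "j = v0"
          then have "i \<in> NG" using \<open>G i j\<close> ij sg unfolding NG_def sgraph_def by auto
          then show ?thesis using Hp_contains[OF pi v0 ij ne] jv unfolding N'_def by auto
        qed
      qed
      then show ?thesis using False yy v0C unfolding g_def h_def m_def r1_def r2_def by auto
    next
      case False2: False
      then show ?thesis using False yy unfolding g_def h_def m_def r1_def r2_def by auto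
    qed
  qed
  have sumpw: "(\<Sum>i<n. \<Sum>j<n. g i j) \<le> (\<Sum>i<n. \<Sum>j<n. h i j - m i j + r1 i j + r2 i j)"
    using pw by (intro sum_mono) auto
  have QG: "Q G n y = (\<Sum>i<n. \<Sum>j<n. g i j)" unfolding Q_def g_def by simp
  have QH: "Q (Hp n dl \<pi>) n y = (\<Sum>i<n. \<Sum>j<n. h i j)" unfolding Q_def h_def by simp
  have Msub: "M \<subseteq> {..<n} \<times> {..<n}" unfolding M_def by (rule Mset_sub)
  have Csub: "C \<subseteq> {..<n}" using C unfolding NG_def by auto
  have sm: "(\<Sum>i<n. \<Sum>j<n. m i j) \<ge> real (card M) * (16 / 25 * s^2)"
  proof -
    have "(\<Sum>i<n. \<Sum>j<n. m i j) = (\<Sum>p\<in>M. y (fst p) * y (snd p))"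
      unfolding m_def by (rule dsum_set[OF Msub])
    also have "\<dots> \<ge> (\<Sum>p\<in>M. 16 / 25 * s^2)"
    proof (intro sum_mono)
      fix p assume p: "p \<in> M"
      then have "fst p < n" "snd p < n" "fst p \<noteq> v0" "snd p \<noteq> v0"
        unfolding M_def Mset_def by auto
      then have a: "y (fst p) \<ge> 4 * s / 5" "y (snd p) \<ge> 4 * s / 5" using yoth by auto
      have "(4 * s / 5) * (4 * s / 5) \<le> y (fst p) * y (snd p)"
        using a s_pos by (intro mult_mono) auto
      then show "16 / 25 * s^2 \<le> y (fst p) * y (snd p)" by (simp add: power2_eq_square)
    qed
    finally show ?thesis by simp
  qed
  have sr1: "(\<Sum>i<n. \<Sum>j<n. r1 i j) \<le> real c * (y v0 * s)"
  proof -
    have "(\<Sum>i<n. \<Sum>j<n. r1 i j) = (\<Sum>j\<in>C. y v0 * y j)"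
      unfolding r1_def by (rule dsum_row[OF v0 Csub])
    also have "\<dots> \<le> (\<Sum>j\<in>C. y v0 * s)"
      using y_le_s Csub ynn by (intro sum_mono mult_left_mono) auto
    finally show ?thesis using C by simp
  qed
  have sr2: "(\<Sum>i<n. \<Sum>j<n. r2 i j) \<le> real c * (y v0 * s)"
  proof -
    have "(\<Sum>i<n. \<Sum>j<n. r2 i j) = (\<Sum>j<n. \<Sum>i<n. r2 i j)" by (rule sum.swap)
    also have "\<dots> = (\<Sum>j\<in>C. y v0 * y j)"
      unfolding r2_def using dsum_row[OF v0 Csub, of "\<lambda>a b. y b * y a"]
      by (simp add: conj_commute mult.commute)
    also have "\<dots> \<le> (\<Sum>j\<in>C. y v0 * s)"
      using y_le_s Csub ynn by (intro sum_mono mult_left_mono) auto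
    finally show ?thesis using C by simp
  qed
  have "Q G n y \<le> Q (Hp n dl \<pi>) n y - (\<Sum>i<n. \<Sum>j<n. m i j) + (\<Sum>i<n. \<Sum>j<n. r1 i j) + (\<Sum>i<n. \<Sum>j<n. r2 i j)"
    using sumpw unfolding QG QH by (simp add: sum.distrib sum_subtractf)
  moreover have "Q (Hp n dl \<pi>) n y \<le> mu * nrm n y" using Qbound[OF pi(1)] .
  moreover have "mu * nrm n y \<le> Q G n y"
  proof -
    have "mu * nrm n y \<le> lam * nrm n y" using mulam nrm_pos[OF ynz] by (intro mult_right_mono) auto
    then show ?thesis using ray by linarith
  qed
  ultimately have key: "real (card M) * (16 / 25 * s^2) \<le> 2 * real c * (y v0 * s)"
    using sm sr1 sr2 by linarith
  have "2 * real c * (y v0 * s) \<le> 2 * real c * (s / 5 * s)"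
    using y0 s_pos c1 by (intro mult_left_mono mult_right_mono) auto
  moreover have "real (card M) \<ge> 2 * real c - 1"
  proof -
    define e where "e = d - dl"
    have ce: "c = e + 1" unfolding c_def e_def by simp
    have "2 * e + 1 \<le> card M" using cM unfolding M_def e_def d_def by simp
    then have "2 * c \<le> card M + 1" unfolding ce by simp
    then have "real (2 * c) \<le> real (card M + 1)" by (simp only: of_nat_le_iff)
    then show ?thesis by simp
  qed
  moreover have "(2 * real c - 1) * (16 / 25 * s^2) \<le> real (card M) * (16 / 25 * s^2)"
    using calculation(2) by (intro mult_right_mono) auto
  ultimately have "(2 * real c - 1) * (16 / 25 * s^2) \<le> 2 * real c * (s / 5 * s)"
    using key by linarith
  then have "(22 * real c - 16) * s^2 \<le> 0" by (simp add: power2_eq_square algebra_simps)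
  moreover have "(22 * real c - 16) * s^2 > 0" using c1 s_pos by simp
  ultimately show False by linarith
qed

end


definition nbF :: "nat \<Rightarrow> (nat \<Rightarrow> nat \<Rightarrow> bool) \<Rightarrow> nat \<Rightarrow> nat set" where
  "nbF n F x = {z. z < n \<and> F x z}"

definition KN :: "nat \<Rightarrow> (nat \<Rightarrow> nat \<Rightarrow> bool) \<Rightarrow> nat \<Rightarrow> nat set" where
  "KN n G u = {w. w < n \<and> w \<noteq> u \<and> \<not> G u w}"

lemma card_KN: "card (KN n G u) = kd n G u" unfolding KN_def kd_def by simp

lemma card_nbF: "card (nbF n F x) = degree n F x" unfolding nbF_def degree_def by simp

definition conf :: "nat \<Rightarrow> (nat \<Rightarrow> nat \<Rightarrow> bool) \<Rightarrow> (nat \<Rightarrow> nat \<Rightarrow> bool) \<Rightarrow> (nat \<Rightarrow> nat) \<Rightarrow> (nat \<times> nat) set" where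
  "conf n F G \<sigma> = {(i, j). i < n \<and> j < n \<and> F i j \<and> \<not> G (\<sigma> i) (\<sigma> j)}"

lemma finite_conf: "finite (conf n F G \<sigma>)"
  by (rule finite_subset[of _ "{..<n} \<times> {..<n}"]) (auto simp: conf_def)

definition swp :: "(nat \<Rightarrow> nat) \<Rightarrow> nat \<Rightarrow> nat \<Rightarrow> nat \<Rightarrow> nat" where
  "swp \<sigma> x w i = (if i = x then \<sigma> w else if i = w then \<sigma> x else \<sigma> i)"

lemma swp_bij:
  assumes "bij_betw \<sigma> {..<n} {..<n}" "x < n" "w < n"
  shows "bij_betw (swp \<sigma> x w) {..<n} {..<n}"
proof -
  have "swp \<sigma> x w = \<sigma> \<circ> Transposition.transpose x w"
    unfolding swp_def by (auto simp: Transposition.transpose_def)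
  moreover have "bij_betw (Transposition.transpose x w) {..<n} {..<n}"
    using assms by (intro bij_betwI[where g = "Transposition.transpose x w"]) (auto simp: Transposition.transpose_def)
  ultimately show ?thesis using assms(1) by (simp add: bij_betw_trans)
qed

lemma swap_step:
  assumes sF: "sgraph n F" and sG: "sgraph n G"
    and x: "x < n" and w: "w < n" and xw: "x \<noteq> w" "\<not> F x w"
    and A: "\<And>z. z < n \<Longrightarrow> F x z \<Longrightarrow> z \<noteq> w \<Longrightarrow> G (\<sigma> w) (\<sigma> z)"
    and B: "\<And>z. z < n \<Longrightarrow> F w z \<Longrightarrow> z \<noteq> x \<Longrightarrow> G (\<sigma> x) (\<sigma> z)"
  shows "conf n F G (swp \<sigma> x w) \<subseteq> conf n F G \<sigma>"
    "\<And>j. (x, j) \<notin> conf n F G (swp \<sigma> x w)"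
proof -
  have Fs: "F a b \<Longrightarrow> F b a" for a b using sF unfolding sgraph_def by blast
  have Gs: "G a b \<Longrightarrow> G b a" for a b using sG unfolding sgraph_def by blast
  have Fi: "\<not> F a a" for a using sF unfolding sgraph_def by blast
  have noX: "\<not> (j < n \<and> F x j \<and> \<not> G (swp \<sigma> x w x) (swp \<sigma> x w j))" for j
  proof
    assume a: "j < n \<and> F x j \<and> \<not> G (swp \<sigma> x w x) (swp \<sigma> x w j)"
    then have "j \<noteq> x" using Fi by auto
    moreover have "j \<noteq> w" using a xw by auto
    ultimately show False using a A[of j] unfolding swp_def by auto
  qed
  have noW: "\<not> (j < n \<and> F w j \<and> \<not> G (swp \<sigma> x w w) (swp \<sigma> x w j))" for j
  proof
    assume a: "j < n \<and> F w j \<and> \<not> G (swp \<sigma> x w w) (swp \<sigma> x w j)"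
    then have "j \<noteq> w" using Fi by auto
    moreover have "j \<noteq> x" using a xw Fs by auto
    ultimately show False using a B[of j] xw unfolding swp_def by auto
  qed
  show "\<And>j. (x, j) \<notin> conf n F G (swp \<sigma> x w)" using noX x unfolding conf_def by auto
  show "conf n F G (swp \<sigma> x w) \<subseteq> conf n F G \<sigma>"
  proof
    fix p assume p: "p \<in> conf n F G (swp \<sigma> x w)"
    obtain i j where ij: "p = (i, j)" "i < n" "j < n" "F i j" "\<not> G (swp \<sigma> x w i) (swp \<sigma> x w j)"
      using p unfolding conf_def by auto
    have "i \<noteq> x" using noX[of j] ij by auto
    moreover have "i \<noteq> w" using noW[of j] ij by auto
    moreover have "j \<noteq> x" using noX[of i] ij Fs Gs by blast
    moreover have "j \<noteq> w" using noW[of i] ij Fs Gs by blast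
    ultimately show "p \<in> conf n F G \<sigma>" using ij unfolding conf_def swp_def by auto
  qed
qed


lemma card_preimage:
  assumes "bij_betw \<sigma> {..<n} {..<n}" "finite A"
  shows "card {w. w < n \<and> \<sigma> w \<in> A} \<le> card A"
proof -
  have inj: "inj_on \<sigma> {w. w < n \<and> \<sigma> w \<in> A}"
    using assms(1) unfolding bij_betw_def by (rule inj_on_subset[OF conjunct1]) auto
  have "card {w. w < n \<and> \<sigma> w \<in> A} = card (\<sigma> ` {w. w < n \<and> \<sigma> w \<in> A})"
    using card_image[OF inj] by simp
  also have "\<dots> \<le> card A" using assms(2) by (intro card_mono) auto
  finally show ?thesis .
qed

lemma exists_good_w:
  assumes sF: "sgraph n F" and sG: "sgraph n G"
    and sig: "bij_betw \<sigma> {..<n} {..<n}" and x: "x < n"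
    and degF: "\<And>i. i < n \<Longrightarrow> degree n F i \<le> D"
    and P: "finite P"
    and budget: "(\<Sum>z\<in>nbF n F x. kd n G (\<sigma> z)) + D * kd n G (\<sigma> x) + card P + D + 1 < n"
  shows "\<exists>w<n. w \<notin> P \<and> w \<noteq> x \<and> \<not> F x w \<and>
     (\<forall>z. z < n \<longrightarrow> F x z \<longrightarrow> z \<noteq> w \<longrightarrow> G (\<sigma> w) (\<sigma> z)) \<and>
     (\<forall>z. z < n \<longrightarrow> F w z \<longrightarrow> z \<noteq> x \<longrightarrow> G (\<sigma> x) (\<sigma> z))"
proof -
  have Fs: "F a b \<Longrightarrow> F b a" for a b using sF unfolding sgraph_def by blast
  have Gs: "G a b \<Longrightarrow> G b a" for a b using sG unfolding sgraph_def by blast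
  have sin: "i < n \<Longrightarrow> \<sigma> i < n" for i using sig by (auto simp: bij_betw_def)
  have sinj: "i < n \<Longrightarrow> j < n \<Longrightarrow> \<sigma> i = \<sigma> j \<Longrightarrow> i = j" for i j
    using sig unfolding bij_betw_def inj_on_def by auto
  define BA where "BA = {w. w < n \<and> (\<exists>z. z < n \<and> F x z \<and> z \<noteq> w \<and> \<not> G (\<sigma> w) (\<sigma> z))}"
  define BB where "BB = {w. w < n \<and> (\<exists>z. z < n \<and> F w z \<and> z \<noteq> x \<and> \<not> G (\<sigma> x) (\<sigma> z))}"
  define Zx where "Zx = {z. z < n \<and> \<sigma> z \<in> KN n G (\<sigma> x)}"
  define Ex where "Ex = P \<union> insert x (nbF n F x)"
  have finKN: "finite (KN n G u)" for u unfolding KN_def by simp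
  have cBA: "card BA \<le> (\<Sum>z\<in>nbF n F x. kd n G (\<sigma> z))"
  proof -
    have "BA \<subseteq> (\<Union>z\<in>nbF n F x. {w. w < n \<and> \<sigma> w \<in> KN n G (\<sigma> z)})"
    proof
      fix w assume "w \<in> BA"
      then obtain z where z: "w < n" "z < n" "F x z" "z \<noteq> w" "\<not> G (\<sigma> w) (\<sigma> z)" unfolding BA_def by auto
      then have "\<sigma> w \<noteq> \<sigma> z" using sinj by blast
      then show "w \<in> (\<Union>z\<in>nbF n F x. {w. w < n \<and> \<sigma> w \<in> KN n G (\<sigma> z)})"
        using z sin Gs unfolding nbF_def KN_def by blast
    qed
    then have "card BA \<le> card (\<Union>z\<in>nbF n F x. {w. w < n \<and> \<sigma> w \<in> KN n G (\<sigma> z)})"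
      by (intro card_mono) (auto simp: nbF_def)
    also have "\<dots> \<le> (\<Sum>z\<in>nbF n F x. card {w. w < n \<and> \<sigma> w \<in> KN n G (\<sigma> z)})"
      by (rule card_UN_le) (simp add: nbF_def)
    also have "\<dots> \<le> (\<Sum>z\<in>nbF n F x. kd n G (\<sigma> z))"
    proof (intro sum_mono)
      fix z
      show "card {w. w < n \<and> \<sigma> w \<in> KN n G (\<sigma> z)} \<le> kd n G (\<sigma> z)"
        using card_preimage[OF sig finKN, of "\<sigma> z"] unfolding card_KN .
    qed
    finally show ?thesis .
  qed
  have cBB: "card BB \<le> D * kd n G (\<sigma> x)"
  proof -
    have "BB \<subseteq> (\<Union>z\<in>Zx. nbF n F z)"
    proof
      fix w assume "w \<in> BB"
      then obtain z where z: "w < n" "z < n" "F w z" "z \<noteq> x" "\<not> G (\<sigma> x) (\<sigma> z)" unfolding BB_def by auto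
      then have "\<sigma> z \<noteq> \<sigma> x" using sinj x by blast
      then show "w \<in> (\<Union>z\<in>Zx. nbF n F z)"
        using z sin Fs unfolding nbF_def KN_def Zx_def by blast
    qed
    then have "card BB \<le> card (\<Union>z\<in>Zx. nbF n F z)"
      by (intro card_mono) (auto simp: nbF_def Zx_def)
    also have "\<dots> \<le> (\<Sum>z\<in>Zx. card (nbF n F z))"
      by (rule card_UN_le) (simp add: Zx_def)
    also have "\<dots> \<le> (\<Sum>z\<in>Zx. D)"
    proof (intro sum_mono)
      fix z assume "z \<in> Zx"
      then show "card (nbF n F z) \<le> D" using degF[of z] unfolding card_nbF Zx_def by auto
    qed
    also have "\<dots> = card Zx * D" by simp
    also have "\<dots> \<le> kd n G (\<sigma> x) * D"
      unfolding Zx_def using card_preimage[OF sig finKN, of "\<sigma> x"] unfolding card_KN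
      by (intro mult_right_mono) auto
    finally show ?thesis by (simp add: mult.commute)
  qed
  have cEx: "card Ex \<le> card P + (D + 1)"
  proof -
    have "card Ex \<le> card P + card (insert x (nbF n F x))" unfolding Ex_def by (rule card_Un_le)
    also have "card (insert x (nbF n F x)) \<le> card (nbF n F x) + 1"
      by (simp add: card_insert_if nbF_def)
    also have "card (nbF n F x) \<le> D" using degF[OF x] unfolding card_nbF .
    finally show ?thesis by simp
  qed
  have "card (BA \<union> BB \<union> Ex) \<le> card (BA \<union> BB) + card Ex" by (rule card_Un_le)
  also have "card (BA \<union> BB) \<le> card BA + card BB" by (rule card_Un_le)
  finally have "card (BA \<union> BB \<union> Ex) \<le> card BA + card BB + card Ex" by simp
  then have "card (BA \<union> BB \<union> Ex) < n" using cBA cBB cEx budget by linarith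
  moreover have "finite (BA \<union> BB \<union> Ex)" using P unfolding BA_def BB_def Ex_def nbF_def by auto
  ultimately have "\<not> {..<n} \<subseteq> BA \<union> BB \<union> Ex"
    using card_mono[of "BA \<union> BB \<union> Ex" "{..<n}"] by auto
  then obtain w where w: "w < n" "w \<notin> BA" "w \<notin> BB" "w \<notin> Ex" by auto
  show ?thesis
  proof (intro exI[of _ w] conjI allI impI)
    show "w < n" "w \<notin> P" "w \<noteq> x" "\<not> F x w" using w unfolding Ex_def nbF_def by auto
    show "G (\<sigma> w) (\<sigma> z)" if "z < n" "F x z" "z \<noteq> w" for z using w that unfolding BA_def by auto
    show "G (\<sigma> x) (\<sigma> z)" if "z < n" "F w z" "z \<noteq> x" for z using w that unfolding BB_def by auto
  qed
qed


lemma extend_bij: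
  fixes n :: nat and \<sigma>0 :: "nat \<Rightarrow> nat"
  assumes P: "P \<subseteq> {..<n}" and inj: "inj_on \<sigma>0 P" and img: "\<sigma>0 ` P \<subseteq> {..<n}"
  shows "\<exists>\<sigma>. bij_betw \<sigma> {..<n} {..<n} \<and> (\<forall>i\<in>P. \<sigma> i = \<sigma>0 i)"
proof -
  define R where "R = {..<n} - P"
  define R' where "R' = {..<n} - \<sigma>0 ` P"
  have finP: "finite P" by (rule finite_subset[OF P]) simp
  have cR: "card R = n - card P" unfolding R_def using P finP by (simp add: card_Diff_subset)
  have cR': "card R' = n - card P" unfolding R'_def using img finP card_image[OF inj]
    by (simp add: card_Diff_subset)
  obtain g where g: "bij_betw g R R'"
    using finite_same_card_bij[of R R'] cR cR' unfolding R_def R'_def by auto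
  define \<sigma> where "\<sigma> i = (if i \<in> P then \<sigma>0 i else g i)" for i
  have b1: "bij_betw \<sigma> P (\<sigma>0 ` P)" unfolding \<sigma>_def using inj
    by (subst bij_betw_cong[where g = \<sigma>0]) (auto simp: bij_betw_def)
  have b2: "bij_betw \<sigma> R R'" unfolding \<sigma>_def using g
    by (subst bij_betw_cong[where g = g]) (auto simp: R_def)
  have b: "bij_betw \<sigma> (P \<union> R) (\<sigma>0 ` P \<union> R')"
    by (rule bij_betw_combine[OF b1 b2]) (auto simp: R_def R'_def)
  have "P \<union> R = {..<n}" "\<sigma>0 ` P \<union> R' = {..<n}" using P img unfolding R_def R'_def by auto
  then show ?thesis using b unfolding \<sigma>_def by auto
qed

lemma swap_lemma:
  assumes sF: "sgraph n F" and sG: "sgraph n G"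
    and degF: "\<And>i. i < n \<Longrightarrow> degree n F i \<le> D"
    and P: "P \<subseteq> {..<n}" and inj: "inj_on \<sigma>0 P" and img: "\<sigma>0 ` P \<subseteq> {..<n}"
    and fixed_ok: "\<And>i j. i \<in> P \<Longrightarrow> j \<in> P \<Longrightarrow> F i j \<Longrightarrow> G (\<sigma>0 i) (\<sigma>0 j)"
    and budget: "\<And>\<sigma> x. bij_betw \<sigma> {..<n} {..<n} \<Longrightarrow> (\<forall>i\<in>P. \<sigma> i = \<sigma>0 i) \<Longrightarrow> x < n \<Longrightarrow> x \<notin> P \<Longrightarrow>
        (\<Sum>z\<in>nbF n F x. kd n G (\<sigma> z)) + D * kd n G (\<sigma> x) + card P + D + 1 < n"
  shows "\<exists>\<sigma>. bij_betw \<sigma> {..<n} {..<n} \<and> (\<forall>i<n. \<forall>j<n. F i j \<longrightarrow> G (\<sigma> i) (\<sigma> j))"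
proof -
  have Fs: "F a b \<Longrightarrow> F b a" for a b using sF unfolding sgraph_def by blast
  have Gs: "G a b \<Longrightarrow> G b a" for a b using sG unfolding sgraph_def by blast
  have finP: "finite P" by (rule finite_subset[OF P]) simp
  define Ok where "Ok \<sigma> = (bij_betw \<sigma> {..<n} {..<n} \<and> (\<forall>i\<in>P. \<sigma> i = \<sigma>0 i))" for \<sigma>
  obtain \<sigma>1 where "Ok \<sigma>1" using extend_bij[OF P inj img] unfolding Ok_def by blast
  then obtain \<sigma> where sig: "Ok \<sigma>" and min: "\<And>\<tau>. Ok \<tau> \<Longrightarrow> card (conf n F G \<sigma>) \<le> card (conf n F G \<tau>)"
    using ex_has_least_nat[of Ok \<sigma>1 "\<lambda>\<sigma>. card (conf n F G \<sigma>)"] by blast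
  have "conf n F G \<sigma> = {}"
  proof (rule ccontr)
    assume "conf n F G \<sigma> \<noteq> {}"
    then obtain a b where ab: "(a, b) \<in> conf n F G \<sigma>" by auto
    then have ab': "(b, a) \<in> conf n F G \<sigma>" unfolding conf_def using Fs Gs by blast
    have "a \<notin> P \<or> b \<notin> P" using ab sig fixed_ok unfolding conf_def Ok_def by auto
    then obtain x yv where xy: "(x, yv) \<in> conf n F G \<sigma>" "x \<notin> P" using ab ab' by blast
    have x: "x < n" using xy unfolding conf_def by auto
    have bs: "bij_betw \<sigma> {..<n} {..<n}" and ext: "\<forall>i\<in>P. \<sigma> i = \<sigma>0 i" using sig unfolding Ok_def by auto
    obtain w where w: "w < n" "w \<notin> P" "w \<noteq> x" "\<not> F x w"
       "\<forall>z. z < n \<longrightarrow> F x z \<longrightarrow> z \<noteq> w \<longrightarrow> G (\<sigma> w) (\<sigma> z)"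
       "\<forall>z. z < n \<longrightarrow> F w z \<longrightarrow> z \<noteq> x \<longrightarrow> G (\<sigma> x) (\<sigma> z)"
      using exists_good_w[OF sF sG bs x degF finP budget[OF bs ext x xy(2)]] by blast
    have A: "\<And>z. z < n \<Longrightarrow> F x z \<Longrightarrow> z \<noteq> w \<Longrightarrow> G (\<sigma> w) (\<sigma> z)" using w(5) by blast
    have B: "\<And>z. z < n \<Longrightarrow> F w z \<Longrightarrow> z \<noteq> x \<Longrightarrow> G (\<sigma> x) (\<sigma> z)" using w(6) by blast
    note ss = swap_step[OF sF sG x w(1) w(3)[symmetric] w(4) A B]
    have "(x, yv) \<notin> conf n F G (swp \<sigma> x w)" by (rule ss(2))
    then have "conf n F G (swp \<sigma> x w) \<subset> conf n F G \<sigma>" using ss(1) xy(1) by blast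
    then have lt: "card (conf n F G (swp \<sigma> x w)) < card (conf n F G \<sigma>)"
      by (rule psubset_card_mono[OF finite_conf])
    have "Ok (swp \<sigma> x w)" unfolding Ok_def
      using swp_bij[OF bs x w(1)] ext xy(2) w(2) unfolding swp_def by auto
    then have "card (conf n F G \<sigma>) \<le> card (conf n F G (swp \<sigma> x w))" by (rule min)
    then show False using lt by simp
  qed
  have "G (\<sigma> i) (\<sigma> j)" if "i < n" "j < n" "F i j" for i j
  proof (rule ccontr)
    assume "\<not> G (\<sigma> i) (\<sigma> j)"
    then have "(i, j) \<in> conf n F G \<sigma>" using that unfolding conf_def by simp
    then show False using \<open>conf n F G \<sigma> = {}\<close> by simp
  qed
  then show ?thesis using sig unfolding Ok_def by blast
qed


definition Wt :: "nat \<Rightarrow> (nat \<Rightarrow> nat \<Rightarrow> bool) \<Rightarrow> (nat \<Rightarrow> nat \<Rightarrow> bool) \<Rightarrow> (nat \<Rightarrow> nat) \<Rightarrow> nat set \<Rightarrow> nat \<Rightarrow> nat" where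
  "Wt n F G \<sigma> P v = (\<Sum>z\<in>nbF n F v \<inter> P. kd n G (\<sigma> z))"

lemma Wt_total:
  fixes n :: nat
  assumes sF: "sgraph n F" and degF: "\<And>i. i < n \<Longrightarrow> degree n F i \<le> D"
    and P: "P \<subseteq> {..<n}" and inj: "inj_on \<sigma> P" and img: "\<sigma> ` P \<subseteq> {..<n}"
  shows "(\<Sum>v<n. Wt n F G \<sigma> P v) \<le> D * (\<Sum>u<n. kd n G u)"
proof -
  have Fs: "F a b \<Longrightarrow> F b a" for a b using sF unfolding sgraph_def by blast
  have finP: "finite P" by (rule finite_subset[OF P]) simp
  have "(\<Sum>v<n. Wt n F G \<sigma> P v) = (\<Sum>v<n. \<Sum>z\<in>P. if F v z then kd n G (\<sigma> z) else 0)"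
  proof (intro sum.cong refl)
    fix v assume v: "v \<in> {..<n}"
    have "Wt n F G \<sigma> P v = (\<Sum>z\<in>P \<inter> {z. F v z}. kd n G (\<sigma> z))"
      unfolding Wt_def nbF_def using P by (intro sum.cong) auto
    also have "\<dots> = (\<Sum>z\<in>P. if z \<in> {z. F v z} then kd n G (\<sigma> z) else 0)"
      by (rule sum.inter_restrict[OF finP])
    finally show "Wt n F G \<sigma> P v = (\<Sum>z\<in>P. if F v z then kd n G (\<sigma> z) else 0)" by simp
  qed
  also have "\<dots> = (\<Sum>z\<in>P. \<Sum>v<n. if F v z then kd n G (\<sigma> z) else 0)" by (rule sum.swap)
  also have "\<dots> = (\<Sum>z\<in>P. degree n F z * kd n G (\<sigma> z))"
  proof (intro sum.cong refl)
    fix z assume z: "z \<in> P"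
    have "(\<Sum>v<n. if F v z then kd n G (\<sigma> z) else 0) = (\<Sum>v\<in>{..<n} \<inter> {v. F z v}. kd n G (\<sigma> z))"
      using Fs by (subst sum.inter_restrict) (auto intro!: sum.cong)
    also have "{..<n} \<inter> {v. F z v} = {j. j < n \<and> F z j}" by auto
    finally show "(\<Sum>v<n. if F v z then kd n G (\<sigma> z) else 0) = degree n F z * kd n G (\<sigma> z)"
      unfolding degree_def by simp
  qed
  also have "\<dots> \<le> (\<Sum>z\<in>P. D * kd n G (\<sigma> z))"
    using degF P by (intro sum_mono mult_right_mono) auto
  also have "\<dots> = D * (\<Sum>u\<in>\<sigma> ` P. kd n G u)"
    by (simp add: sum_distrib_left sum.reindex[OF inj])
  also have "\<dots> \<le> D * (\<Sum>u<n. kd n G u)"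
    using img by (intro mult_left_mono sum_mono2) auto
  finally show ?thesis .
qed

lemma Z_count:
  fixes n :: nat and f :: "nat \<Rightarrow> nat"
  assumes "(\<Sum>v<n. f v) \<le> K * n" "n > 0"
  shows "card {v. v < n \<and> n \<le> 10 * f v} \<le> 10 * K"
proof -
  define Z where "Z = {v. v < n \<and> n \<le> 10 * f v}"
  have "card Z * n = (\<Sum>v\<in>Z. n)" by simp
  also have "\<dots> \<le> (\<Sum>v\<in>Z. 10 * f v)" by (intro sum_mono) (auto simp: Z_def)
  also have "\<dots> \<le> (\<Sum>v<n. 10 * f v)" by (intro sum_mono2) (auto simp: Z_def)
  also have "\<dots> = 10 * (\<Sum>v<n. f v)" by (simp add: sum_distrib_left)
  also have "\<dots> \<le> 10 * K * n" using assms(1) by simp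
  finally have "card Z * n \<le> (10 * K) * n" by simp
  then show ?thesis using assms(2) unfolding Z_def by simp
qed


lemma greedy_step:
  fixes n :: nat
  assumes sF: "sgraph n F" and degF: "\<And>i. i < n \<Longrightarrow> degree n F i \<le> D"
    and total: "(\<Sum>u<n. kd n G u) \<le> 3 * n" and n0: "n > 0"
    and P: "P \<subseteq> {..<n}" and inj: "inj_on \<sigma> P" and img: "\<sigma> ` P \<subseteq> {..<n}"
    and Wb: "\<And>v. v < n \<Longrightarrow> v \<notin> P \<Longrightarrow> 10 * Wt n F G \<sigma> P v \<le> 9 * n"
    and h: "h \<notin> \<sigma> ` P" and marg: "10 * kd n G h \<le> 8 * n"
    and cnt: "card P * (D + 1) + 30 * D * D < n"
  shows "\<exists>x<n. x \<notin> P \<and> (\<forall>z\<in>P. \<not> F x z) \<and> inj_on (\<sigma>(x := h)) (insert x P) \<and>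
     (\<forall>v<n. v \<notin> insert x P \<longrightarrow> 10 * Wt n F G (\<sigma>(x := h)) (insert x P) v \<le> 9 * n)"
proof -
  have Fs: "F a b \<Longrightarrow> F b a" for a b using sF unfolding sgraph_def by blast
  have finP: "finite P" by (rule finite_subset[OF P]) simp
  define Z where "Z = {v. v < n \<and> n \<le> 10 * Wt n F G \<sigma> P v}"
  have tot: "(\<Sum>v<n. Wt n F G \<sigma> P v) \<le> (3 * D) * n"
  proof -
    have "(\<Sum>v<n. Wt n F G \<sigma> P v) \<le> D * (\<Sum>u<n. kd n G u)" by (rule Wt_total[OF sF degF P inj img])
    also have "\<dots> \<le> D * (3 * n)" using total by simp
    finally show ?thesis by simp
  qed
  have cZ: "card Z \<le> 30 * D" using Z_count[OF tot n0] unfolding Z_def by simp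
  define Bad where "Bad = P \<union> (\<Union>z\<in>P. nbF n F z) \<union> (\<Union>v\<in>Z. nbF n F v)"
  have finZ: "finite Z" unfolding Z_def by simp
  have c1: "card (\<Union>z\<in>P. nbF n F z) \<le> card P * D"
  proof -
    have "card (\<Union>z\<in>P. nbF n F z) \<le> (\<Sum>z\<in>P. card (nbF n F z))" by (rule card_UN_le[OF finP])
    also have "\<dots> \<le> (\<Sum>z\<in>P. D)" using degF P unfolding card_nbF by (intro sum_mono) auto
    finally show ?thesis by simp
  qed
  have c2: "card (\<Union>v\<in>Z. nbF n F v) \<le> 30 * D * D"
  proof -
    have "card (\<Union>v\<in>Z. nbF n F v) \<le> (\<Sum>v\<in>Z. card (nbF n F v))" by (rule card_UN_le[OF finZ])
    also have "\<dots> \<le> (\<Sum>v\<in>Z. D)" using degF unfolding card_nbF Z_def by (intro sum_mono) auto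
    also have "\<dots> = card Z * D" by simp
    also have "\<dots> \<le> 30 * D * D" using cZ by simp
    finally show ?thesis .
  qed
  have "card Bad \<le> card (P \<union> (\<Union>z\<in>P. nbF n F z)) + card (\<Union>v\<in>Z. nbF n F v)"
    unfolding Bad_def by (rule card_Un_le)
  also have "card (P \<union> (\<Union>z\<in>P. nbF n F z)) \<le> card P + card (\<Union>z\<in>P. nbF n F z)" by (rule card_Un_le)
  finally have "card Bad \<le> card P + card P * D + 30 * D * D" using c1 c2 by linarith
  then have cB: "card Bad < n" using cnt by (simp add: algebra_simps)
  have finnb: "finite (nbF n F z)" for z unfolding nbF_def by simp
  have finB: "finite Bad" unfolding Bad_def using finP finZ finnb by blast
  have "\<not> {..<n} \<subseteq> Bad"
  proof
    assume "{..<n} \<subseteq> Bad"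
    then have "card {..<n} \<le> card Bad" by (rule card_mono[OF finB])
    then show False using cB by simp
  qed
  then obtain x where x: "x < n" "x \<notin> Bad" by auto
  have xP: "x \<notin> P" using x unfolding Bad_def by blast
  have xnP: "\<forall>z\<in>P. \<not> F x z"
  proof (intro ballI notI)
    fix z assume z: "z \<in> P" "F x z"
    then have "x \<in> nbF n F z" using Fs[OF z(2)] x(1) unfolding nbF_def by simp
    then have "x \<in> Bad" using z(1) unfolding Bad_def by blast
    then show False using x(2) by simp
  qed
  have xZ: "\<not> F v x" if "v \<in> Z" for v
  proof
    assume "F v x"
    then have "x \<in> nbF n F v" using x(1) unfolding nbF_def by simp
    then have "x \<in> Bad" using that unfolding Bad_def by blast
    then show False using x(2) by simp
  qed
  show ?thesis
  proof (intro exI[of _ x] conjI allI impI ballI)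
    show "x < n" "x \<notin> P" using x xP by auto
    show "\<not> F x z" if "z \<in> P" for z using xnP that by blast
    show "inj_on (\<sigma>(x := h)) (insert x P)" using inj h xP
      by (auto simp: inj_on_def)
    fix v assume v: "v < n" "v \<notin> insert x P"
    have eqP: "(\<Sum>z\<in>nbF n F v \<inter> P. kd n G ((\<sigma>(x := h)) z)) = Wt n F G \<sigma> P v"
      unfolding Wt_def using xP by (intro sum.cong) auto
    show "10 * Wt n F G (\<sigma>(x := h)) (insert x P) v \<le> 9 * n"
    proof (cases "F v x")
      case True
      have "nbF n F v \<inter> insert x P = insert x (nbF n F v \<inter> P)" using True x unfolding nbF_def by auto
      then have "Wt n F G (\<sigma>(x := h)) (insert x P) v = kd n G h + Wt n F G \<sigma> P v"
        unfolding Wt_def using xP finP eqP[unfolded Wt_def] by (simp add: nbF_def)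
      moreover have "v \<notin> Z" using xZ True by blast
      then have "10 * Wt n F G \<sigma> P v < n" using v unfolding Z_def by auto
      ultimately show ?thesis using marg by simp
    next
      case False
      have "nbF n F v \<inter> insert x P = nbF n F v \<inter> P" using False unfolding nbF_def by auto
      then have "Wt n F G (\<sigma>(x := h)) (insert x P) v = Wt n F G \<sigma> P v"
        using eqP unfolding Wt_def by simp
      then show ?thesis using Wb v by simp
    qed
  qed
qed


lemma greedy:
  fixes n :: nat
  assumes sF: "sgraph n F" and degF: "\<And>i. i < n \<Longrightarrow> degree n F i \<le> D"
    and total: "(\<Sum>u<n. kd n G u) \<le> 3 * n" and n0: "n > 0"
    and P0: "P0 \<subseteq> {..<n}" and inj0: "inj_on \<sigma>0 P0" and img0: "\<sigma>0 ` P0 \<subseteq> {..<n}"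
    and Wb0: "\<And>v. v < n \<Longrightarrow> v \<notin> P0 \<Longrightarrow> 10 * Wt n F G \<sigma>0 P0 v \<le> 9 * n"
    and Bf: "finite Bf" "Bf \<subseteq> {..<n}" "Bf \<inter> \<sigma>0 ` P0 = {}"
    and marg: "\<And>h. h \<in> Bf \<Longrightarrow> 10 * kd n G h \<le> 8 * n"
    and cnt: "(card P0 + card Bf) * (D + 1) + 30 * D * D < n"
  shows "\<exists>X \<sigma>. X \<subseteq> {..<n} \<and> X \<inter> P0 = {} \<and> (\<forall>i\<in>P0. \<sigma> i = \<sigma>0 i) \<and> inj_on \<sigma> (P0 \<union> X) \<and>
    \<sigma> ` (P0 \<union> X) = \<sigma>0 ` P0 \<union> Bf \<and> (\<forall>x\<in>X. \<forall>z\<in>P0 \<union> X. \<not> F x z) \<and>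
    (\<forall>v<n. v \<notin> P0 \<union> X \<longrightarrow> 10 * Wt n F G \<sigma> (P0 \<union> X) v \<le> 9 * n) \<and> card X = card Bf"
proof -
  have Fs: "F a b \<Longrightarrow> F b a" for a b using sF unfolding sgraph_def by blast
  have Fi: "\<not> F a a" for a using sF unfolding sgraph_def by blast
  have finP0: "finite P0" by (rule finite_subset[OF P0]) simp
  define Q where "Q B = (\<exists>X \<sigma>. X \<subseteq> {..<n} \<and> X \<inter> P0 = {} \<and> (\<forall>i\<in>P0. \<sigma> i = \<sigma>0 i) \<and> inj_on \<sigma> (P0 \<union> X) \<and>
    \<sigma> ` (P0 \<union> X) = \<sigma>0 ` P0 \<union> B \<and> (\<forall>x\<in>X. \<forall>z\<in>P0 \<union> X. \<not> F x z) \<and>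
    (\<forall>v<n. v \<notin> P0 \<union> X \<longrightarrow> 10 * Wt n F G \<sigma> (P0 \<union> X) v \<le> 9 * n) \<and> card X = card B)" for B
  have "Q Bf"
  proof (rule finite_subset_induct'[where P = Q, OF Bf(1) subset_refl])
    show "Q {}" unfolding Q_def using inj0 Wb0
      by (intro exI[of _ "{}"] exI[of _ \<sigma>0]) auto
  next
    fix h B assume fB: "finite B" and hB: "h \<in> Bf" and BB: "B \<subseteq> Bf" and hnB: "h \<notin> B" and IH: "Q B"
    obtain X \<sigma> where X: "X \<subseteq> {..<n}" "X \<inter> P0 = {}" "\<forall>i\<in>P0. \<sigma> i = \<sigma>0 i" "inj_on \<sigma> (P0 \<union> X)"
      "\<sigma> ` (P0 \<union> X) = \<sigma>0 ` P0 \<union> B" "\<forall>x\<in>X. \<forall>z\<in>P0 \<union> X. \<not> F x z"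
      "\<forall>v<n. v \<notin> P0 \<union> X \<longrightarrow> 10 * Wt n F G \<sigma> (P0 \<union> X) v \<le> 9 * n" "card X = card B"
      using IH unfolding Q_def by blast
    let ?P = "P0 \<union> X"
    have Psub: "?P \<subseteq> {..<n}" using P0 X(1) by auto
    have finX: "finite X" by (rule finite_subset[OF X(1)]) simp
    have img: "\<sigma> ` ?P \<subseteq> {..<n}" using X(5) img0 Bf(2) BB by auto
    have hP: "h \<notin> \<sigma> ` ?P" using X(5) hnB hB Bf(3) by auto
    have cardP: "card ?P = card P0 + card B"
    proof -
      have "P0 \<inter> X = {}" using X(2) by blast
      then have "card ?P = card P0 + card X" using finP0 finX by (rule card_Un_disjoint[rotated 2])
      then show ?thesis using X(8) by simp
    qed
    have "card B \<le> card Bf" using card_mono[OF Bf(1) BB] .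
    then have "card ?P \<le> card P0 + card Bf" using cardP by simp
    then have "card ?P * (D + 1) \<le> (card P0 + card Bf) * (D + 1)" by (rule mult_right_mono) simp
    then have cnt': "card ?P * (D + 1) + 30 * D * D < n" using cnt by linarith
    have Wb: "\<And>v. v < n \<Longrightarrow> v \<notin> ?P \<Longrightarrow> 10 * Wt n F G \<sigma> ?P v \<le> 9 * n" using X(7) by blast
    obtain x where x: "x < n" "x \<notin> ?P" "\<forall>z\<in>?P. \<not> F x z" "inj_on (\<sigma>(x := h)) (insert x ?P)"
      "\<forall>v<n. v \<notin> insert x ?P \<longrightarrow> 10 * Wt n F G (\<sigma>(x := h)) (insert x ?P) v \<le> 9 * n"
      using greedy_step[OF sF degF total n0 Psub X(4) img Wb hP marg[OF hB] cnt'] by blast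
    have ins: "P0 \<union> insert x X = insert x ?P" by auto
    show "Q (insert h B)" unfolding Q_def
    proof (intro exI[of _ "insert x X"] exI[of _ "\<sigma>(x := h)"] conjI)
      show "insert x X \<subseteq> {..<n}" using x(1) X(1) by auto
      show "insert x X \<inter> P0 = {}" using x(2) X(2) by auto
      show "\<forall>i\<in>P0. (\<sigma>(x := h)) i = \<sigma>0 i" using x(2) X(3) by auto
      show "inj_on (\<sigma>(x := h)) (P0 \<union> insert x X)" unfolding ins by (rule x(4))
      have "(\<sigma>(x := h)) ` (P0 \<union> insert x X) = insert h (\<sigma> ` ?P)" using x(2) by auto
      then show "(\<sigma>(x := h)) ` (P0 \<union> insert x X) = \<sigma>0 ` P0 \<union> insert h B" using X(5) by auto
      show "\<forall>y\<in>insert x X. \<forall>z\<in>P0 \<union> insert x X. \<not> F y z"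
      proof (intro ballI)
        fix y z assume y: "y \<in> insert x X" and z: "z \<in> P0 \<union> insert x X"
        show "\<not> F y z"
        proof (cases "y = x")
          case True
          then show ?thesis using x(3) z Fi by auto
        next
          case False
          then have yX: "y \<in> X" using y by simp
          show ?thesis
          proof (cases "z = x")
            case True
            have "\<not> F x y" using x(3) yX by blast
            then show ?thesis using True Fs[of y x] by auto
          next
            case False
            then have "z \<in> ?P" using z by simp
            then show ?thesis using X(6) yX by blast
          qed
        qed
      qed
      show "\<forall>v<n. v \<notin> P0 \<union> insert x X \<longrightarrow> 10 * Wt n F G (\<sigma>(x := h)) (P0 \<union> insert x X) v \<le> 9 * n"
        unfolding ins by (rule x(5))
      show "card (insert x X) = card (insert h B)" using x(2) X(8) finX fB hnB by simp
    qed
  qed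
  then show ?thesis unfolding Q_def .
qed


lemma clique_extract:
  fixes A :: "nat set"
  assumes "finite A" "m \<le> card A" "\<And>a b. \<not> G a b \<Longrightarrow> \<not> G b a"
    "card {(a, b). a \<in> A \<and> b \<in> A \<and> a \<noteq> b \<and> \<not> G a b} \<le> 2 * (card A - m)"
  shows "\<exists>C\<subseteq>A. card C = m \<and> (\<forall>a\<in>C. \<forall>b\<in>C. a \<noteq> b \<longrightarrow> G a b)"
  using assms
proof (induction "card A - m" arbitrary: A)
  case 0
  then have cA: "card A = m" by simp
  have "{(a, b). a \<in> A \<and> b \<in> A \<and> a \<noteq> b \<and> \<not> G a b} = {}"
  proof -
    have fin: "finite {(a, b). a \<in> A \<and> b \<in> A \<and> a \<noteq> b \<and> \<not> G a b}"
      by (rule finite_subset[of _ "A \<times> A"]) (use 0 in auto)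
    show ?thesis using 0(5) cA card_0_eq[OF fin] by simp
  qed
  then show ?case using cA by (intro exI[of _ A]) auto
next
  case (Suc k)
  define PS where "PS = {(a, b). a \<in> A \<and> b \<in> A \<and> a \<noteq> b \<and> \<not> G a b}"
  have finPS: "finite PS" unfolding PS_def by (rule finite_subset[of _ "A \<times> A"]) (use Suc in auto)
  show ?case
  proof (cases "PS = {}")
    case True
    obtain C where "C \<subseteq> A" "card C = m" using obtain_subset_with_card_n[OF Suc(4)] by blast
    then show ?thesis using True unfolding PS_def by (intro exI[of _ C]) auto
  next
    case False
    then obtain a b where ab: "a \<in> A" "b \<in> A" "a \<noteq> b" "\<not> G a b" unfolding PS_def by auto
    define A' where "A' = A - {a}"
    have cA': "card A' = card A - 1" unfolding A'_def using ab Suc(3) by simp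
    have k: "k = card A' - m" using Suc(2) cA' by simp
    have m': "m \<le> card A'" using Suc(2) cA' by simp
    define PS' where "PS' = {(a, b). a \<in> A' \<and> b \<in> A' \<and> a \<noteq> b \<and> \<not> G a b}"
    have "PS' \<subseteq> PS - {(a, b), (b, a)}" unfolding PS'_def PS_def A'_def by auto
    moreover have "(a, b) \<in> PS" "(b, a) \<in> PS" using ab Suc(5) unfolding PS_def by auto
    ultimately have "card PS' \<le> card PS - 2"
    proof -
      assume s1: "PS' \<subseteq> PS - {(a, b), (b, a)}" and s2: "(a, b) \<in> PS" "(b, a) \<in> PS"
      have c2: "card {(a, b), (b, a)} = 2" using ab(3) by simp
      have "card (PS - {(a, b), (b, a)}) = card PS - card {(a, b), (b, a)}"
        using s2 by (intro card_Diff_subset) auto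
      then have "card (PS - {(a, b), (b, a)}) = card PS - 2" using c2 by simp
      moreover have "card PS' \<le> card (PS - {(a, b), (b, a)})"
        using s1 finPS by (intro card_mono) auto
      ultimately show ?thesis by simp
    qed
    then have "card PS' \<le> 2 * (card A' - m)" using Suc(6) Suc(2) cA' unfolding PS_def by simp
    then obtain C where "C \<subseteq> A'" "card C = m" "\<forall>a\<in>C. \<forall>b\<in>C. a \<noteq> b \<longrightarrow> G a b"
      using Suc(1)[OF k _ m' Suc(5)] Suc(3) unfolding PS'_def A'_def by auto
    then show ?thesis unfolding A'_def by (intro exI[of _ C]) auto
  qed
qed


lemma kd_deg:
  assumes sG: "sgraph n G" and u: "u < n"
  shows "kd n G u + degree n G u = n - 1"
proof -
  let ?A = "{w. w < n \<and> w \<noteq> u \<and> \<not> G u w}"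
  let ?B = "{j. j < n \<and> G u j}"
  have un: "?A \<union> ?B = {..<n} - {u}"
    using sG unfolding sgraph_def by auto
  have dj: "?A \<inter> ?B = {}" by auto
  have f1: "finite ?A" by simp
  have f2: "finite ?B" by simp
  have "card (?A \<union> ?B) = card ?A + card ?B" by (rule card_Un_disjoint[OF f1 f2 dj])
  then have "card ?A + card ?B = card ({..<n} - {u})" using un by simp
  then show ?thesis using u unfolding kd_def degree_def by simp
qed

lemma heavy_count:
  fixes n :: nat
  assumes total: "(\<Sum>u<n. kd n G u) \<le> 3 * n" and n0: "n > 0"
  shows "card {u. u < n \<and> n < 40 * D * kd n G u} \<le> 120 * D"
proof -
  define B where "B = {u. u < n \<and> n < 40 * D * kd n G u}"
  have "card B * n = (\<Sum>u\<in>B. n)" by simp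
  also have "\<dots> \<le> (\<Sum>u\<in>B. 40 * D * kd n G u)" by (intro sum_mono) (auto simp: B_def)
  also have "\<dots> \<le> (\<Sum>u<n. 40 * D * kd n G u)" by (intro sum_mono2) (auto simp: B_def)
  also have "\<dots> = 40 * D * (\<Sum>u<n. kd n G u)" by (simp add: sum_distrib_left)
  also have "\<dots> \<le> 40 * D * (3 * n)" using total by simp
  finally have "card B * n \<le> (120 * D) * n" by simp
  then show ?thesis using n0 unfolding B_def by simp
qed

lemma kd_le_row:
  assumes u: "u < n" and uv: "u \<noteq> v0"
  shows "kd n G u \<le> card {w. (u, w) \<in> Mset n G v0} + 1"
    "G u v0 \<Longrightarrow> kd n G u \<le> card {w. (u, w) \<in> Mset n G v0}"
proof -
  have fin: "finite {w. (u, w) \<in> Mset n G v0}"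
    by (rule finite_subset[of _ "{..<n}"]) (auto simp: Mset_def)
  have sub: "KN n G u \<subseteq> insert v0 {w. (u, w) \<in> Mset n G v0}"
    using u uv unfolding KN_def Mset_def by auto
  have "kd n G u \<le> card (insert v0 {w. (u, w) \<in> Mset n G v0})"
    unfolding card_KN[symmetric] using sub fin by (intro card_mono) auto
  also have "\<dots> \<le> card {w. (u, w) \<in> Mset n G v0} + 1" using fin by (simp add: card_insert_if)
  finally show "kd n G u \<le> card {w. (u, w) \<in> Mset n G v0} + 1" .
  assume G: "G u v0"
  have "KN n G u \<subseteq> {w. (u, w) \<in> Mset n G v0}"
    using u uv G unfolding KN_def Mset_def by auto
  then show "kd n G u \<le> card {w. (u, w) \<in> Mset n G v0}"
    unfolding card_KN[symmetric] using fin by (intro card_mono) auto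
qed

lemma rows_le_M:
  assumes A: "finite A"
  shows "(\<Sum>u\<in>A. card {w. (u, w) \<in> Mset n G v0}) \<le> card (Mset n G v0)"
proof -
  have fin: "\<forall>u\<in>A. finite {w. (u, w) \<in> Mset n G v0}"
    by (auto intro: finite_subset[of _ "{..<n}"] simp: Mset_def)
  have "(\<Sum>u\<in>A. card {w. (u, w) \<in> Mset n G v0}) = card (Sigma A (\<lambda>u. {w. (u, w) \<in> Mset n G v0}))"
    using card_SigmaI[OF A fin] by simp
  also have "\<dots> \<le> card (Mset n G v0)" by (intro card_mono finite_Mset) auto
  finally show ?thesis .
qed


locale pack =
  fixes n :: nat and F G :: "nat \<Rightarrow> nat \<Rightarrow> bool" and D dl x0 :: nat
  assumes sF: "sgraph n F" and sG: "sgraph n G"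
    and degF: "\<And>i. i < n \<Longrightarrow> degree n F i \<le> D" and D1: "1 \<le> D"
    and x0: "x0 < n" and dx0: "degree n F x0 = dl" and dl1: "1 \<le> dl"
    and degG: "\<And>u. u < n \<Longrightarrow> dl \<le> degree n G u"
    and total: "(\<Sum>u<n. kd n G u) \<le> 3 * n"
    and moveM: "\<And>v0. v0 < n \<Longrightarrow> 5 * degree n G v0 \<le> n - 2 \<Longrightarrow> card (Mset n G v0) \<le> 2 * (degree n G v0 - dl)"
    and big: "1600 * D * D \<le> n" and big2: "1000000 \<le> n"
begin

lemma Fs: "F a b \<Longrightarrow> F b a" using sF unfolding sgraph_def by blast
lemma Gs: "G a b \<Longrightarrow> G b a" using sG unfolding sgraph_def by blast
lemma Fi: "\<not> F a a" using sF unfolding sgraph_def by blast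
lemma Gi: "\<not> G a a" using sG unfolding sgraph_def by blast
lemma Fn: "F a b \<Longrightarrow> a < n \<and> b < n" using sF unfolding sgraph_def by blast
lemma Gn: "G a b \<Longrightarrow> a < n \<and> b < n" using sG unfolding sgraph_def by blast

definition base where
  "base P0 \<sigma>0 = (P0 \<subseteq> {..<n} \<and> inj_on \<sigma>0 P0 \<and> \<sigma>0 ` P0 \<subseteq> {..<n} \<and>
     (\<forall>i\<in>P0. \<forall>j\<in>P0. F i j \<longrightarrow> G (\<sigma>0 i) (\<sigma>0 j)) \<and>
     (\<forall>v<n. v \<notin> P0 \<longrightarrow> 10 * Wt n F G \<sigma>0 P0 v \<le> 9 * n) \<and> card P0 \<le> D + 1 \<and>
     (\<forall>h<n. h \<notin> \<sigma>0 ` P0 \<longrightarrow> 10 * kd n G h \<le> 8 * n))"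

lemma base_ii:
  assumes all: "\<And>v. v < n \<Longrightarrow> \<not> 5 * degree n G v \<le> n - 2"
  shows "base {} id"
  unfolding base_def
proof (intro conjI allI impI)
  fix h assume h: "h < n" "h \<notin> id ` {}"
  have "kd n G h + degree n G h = n - 1" by (rule kd_deg[OF sG h(1)])
  moreover have "5 * degree n G h > n - 2" using all[OF h(1)] by simp
  ultimately show "10 * kd n G h \<le> 8 * n" by linarith
qed (auto simp: Wt_def)

lemma base_i:
  assumes v0: "v0 < n" and d5: "5 * degree n G v0 \<le> n - 2"
  shows "\<exists>P0 \<sigma>0. base P0 \<sigma>0"
proof -
  define d where "d = degree n G v0"
  define M where "M = Mset n G v0"
  have cM: "card M \<le> 2 * (d - dl)" using moveM[OF v0 d5] unfolding M_def d_def .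
  have ddl: "dl \<le> d" using degG[OF v0] unfolding d_def .
  define NG where "NG = {j. j < n \<and> G v0 j}"
  have cNG: "card NG = d" unfolding NG_def d_def degree_def by simp
  have finNG: "finite NG" unfolding NG_def by simp
  have pairs: "{(a, b). a \<in> NG \<and> b \<in> NG \<and> a \<noteq> b \<and> \<not> G a b} \<subseteq> M"
    unfolding NG_def M_def Mset_def using Gi by auto
  have "card {(a, b). a \<in> NG \<and> b \<in> NG \<and> a \<noteq> b \<and> \<not> G a b} \<le> card M"
    using pairs finite_Mset unfolding M_def by (rule card_mono[rotated])
  then have cp: "card {(a, b). a \<in> NG \<and> b \<in> NG \<and> a \<noteq> b \<and> \<not> G a b} \<le> 2 * (card NG - dl)"
    using cM cNG by simp
  obtain C where C: "C \<subseteq> NG" "card C = dl" "\<forall>a\<in>C. \<forall>b\<in>C. a \<noteq> b \<longrightarrow> G a b"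
    using clique_extract[OF finNG _ _ cp] ddl cNG Gs by blast
  have finC: "finite C" using finite_subset[OF C(1) finNG] .
  have finN: "finite (nbF n F x0)" unfolding nbF_def by simp
  obtain f where f: "bij_betw f (nbF n F x0) C"
    using finite_same_card_bij[OF finN finC] C(2) dx0 card_nbF by metis
  define \<sigma>0 where "\<sigma>0 z = (if z = x0 then v0 else f z)" for z
  define P0 where "P0 = insert x0 (nbF n F x0)"
  have x0N: "x0 \<notin> nbF n F x0" using Fi unfolding nbF_def by simp
  have v0C: "v0 \<notin> C" using C(1) Gi unfolding NG_def by auto
  have fC: "z \<in> nbF n F x0 \<Longrightarrow> f z \<in> C" for z using f unfolding bij_betw_def by auto
  have finj: "inj_on f (nbF n F x0)" using f unfolding bij_betw_def by auto
  have s0: "z \<in> nbF n F x0 \<Longrightarrow> \<sigma>0 z = f z" for z using x0N unfolding \<sigma>0_def by auto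
  have CG: "u \<in> C \<Longrightarrow> G v0 u" for u using C(1) unfolding NG_def by auto
  have Cn: "u \<in> C \<Longrightarrow> u < n" for u using C(1) unfolding NG_def by auto
  have "base P0 \<sigma>0" unfolding base_def
  proof (intro conjI allI impI ballI)
    show "P0 \<subseteq> {..<n}" unfolding P0_def nbF_def using x0 by auto
    show "inj_on \<sigma>0 P0" unfolding P0_def inj_on_def
    proof (intro ballI impI)
      fix a b assume a: "a \<in> insert x0 (nbF n F x0)" and b: "b \<in> insert x0 (nbF n F x0)" and e: "\<sigma>0 a = \<sigma>0 b"
      show "a = b"
      proof (cases "a = x0")
        case True
        then show ?thesis using b e fC v0C s0 by (cases "b = x0") (auto simp: \<sigma>0_def)
      next
        case False
        then have aN: "a \<in> nbF n F x0" using a by simp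
        show ?thesis
        proof (cases "b = x0")
          case True
          then show ?thesis using aN e fC[OF aN] v0C s0[OF aN] by (auto simp: \<sigma>0_def)
        next
          case False
          then have bN: "b \<in> nbF n F x0" using b by simp
          then show ?thesis using aN e s0 finj unfolding inj_on_def by metis
        qed
      qed
    qed
    show "\<sigma>0 ` P0 \<subseteq> {..<n}" unfolding P0_def using v0 fC Cn s0 by (auto simp: \<sigma>0_def)
    show "card P0 \<le> D + 1" unfolding P0_def using x0N finN card_nbF dx0 degF[OF x0] by simp
    fix i j assume i: "i \<in> P0" and j: "j \<in> P0" and Fij: "F i j"
    have ij: "i \<noteq> j" using Fij Fi by auto
    show "G (\<sigma>0 i) (\<sigma>0 j)"
    proof (cases "i = x0")
      case True
      then have jN: "j \<in> nbF n F x0" using j ij unfolding P0_def by auto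
      then show ?thesis using True CG[OF fC[OF jN]] s0[OF jN] by (simp add: \<sigma>0_def)
    next
      case False
      then have iN: "i \<in> nbF n F x0" using i unfolding P0_def by auto
      show ?thesis
      proof (cases "j = x0")
        case True
        then show ?thesis using iN CG[OF fC[OF iN]] s0[OF iN] Gs by (simp add: \<sigma>0_def)
      next
        case False
        then have jN: "j \<in> nbF n F x0" using j unfolding P0_def by auto
        have "f i \<noteq> f j" using finj iN jN ij unfolding inj_on_def by blast
        then show ?thesis using C(3) fC[OF iN] fC[OF jN] s0[OF iN] s0[OF jN] by simp
      qed
    qed
  next
    fix v assume v: "v < n" "v \<notin> P0"
    have sub: "nbF n F v \<inter> P0 \<subseteq> nbF n F x0"
    proof
      fix z assume z: "z \<in> nbF n F v \<inter> P0"
      have "z \<noteq> x0"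
      proof
        assume "z = x0"
        then have "F x0 v" using z Fs unfolding nbF_def by auto
        then have "v \<in> P0" using v(1) unfolding P0_def nbF_def by auto
        then show False using v(2) by simp
      qed
      then show "z \<in> nbF n F x0" using z unfolding P0_def by auto
    qed
    have "Wt n F G \<sigma>0 P0 v \<le> (\<Sum>z\<in>nbF n F x0. kd n G (\<sigma>0 z))"
      unfolding Wt_def using sub finN by (intro sum_mono2) auto
    also have "\<dots> = (\<Sum>z\<in>nbF n F x0. kd n G (f z))" using s0 by (intro sum.cong) auto
    also have "\<dots> = (\<Sum>u\<in>C. kd n G u)" by (rule sum.reindex_bij_betw[OF f])
    also have "\<dots> \<le> (\<Sum>u\<in>C. card {w. (u, w) \<in> Mset n G v0})"
    proof (intro sum_mono)
      fix u assume u: "u \<in> C"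
      have "u \<noteq> v0" using u v0C by auto
      then show "kd n G u \<le> card {w. (u, w) \<in> Mset n G v0}"
        using kd_le_row(2)[OF Cn[OF u]] Gs[OF CG[OF u]] by blast
    qed
    also have "\<dots> \<le> card M" unfolding M_def by (rule rows_le_M[OF finC])
    finally have "Wt n F G \<sigma>0 P0 v \<le> 2 * d" using cM by linarith
    moreover have "5 * d \<le> n - 2" using d5 unfolding d_def .
    ultimately show "10 * Wt n F G \<sigma>0 P0 v \<le> 9 * n" by linarith
  next
    fix h assume h: "h < n" "h \<notin> \<sigma>0 ` P0"
    have "h \<noteq> v0" using h(2) unfolding P0_def \<sigma>0_def by auto
    then have "kd n G h \<le> card {w. (h, w) \<in> Mset n G v0} + 1" by (rule kd_le_row(1)[OF h(1)])
    also have "card {w. (h, w) \<in> Mset n G v0} \<le> card M"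
      using rows_le_M[of "{h}" n G v0] unfolding M_def by simp
    finally have "kd n G h \<le> 2 * d + 1" using cM by linarith
    moreover have "5 * d \<le> n - 2" using d5 unfolding d_def .
    ultimately show "10 * kd n G h \<le> 8 * n" using big2 by linarith
  qed
  then show ?thesis by blast
qed

lemma base_exists: "\<exists>P0 \<sigma>0. base P0 \<sigma>0"
proof (cases "\<exists>v<n. 5 * degree n G v \<le> n - 2")
  case True
  then show ?thesis using base_i by blast
next
  case False
  then show ?thesis using base_ii by blast
qed

end


context pack
begin

lemma arith1: "(D + 1 + 120 * D) * (D + 1) + 30 * D * D < n"
proof -
  have a: "D + 1 + 120 * D \<le> 122 * D" using D1 by simp
  have b: "D + 1 \<le> 2 * D" using D1 by simp
  have "(D + 1 + 120 * D) * (D + 1) \<le> (122 * D) * (2 * D)" using a b by (rule mult_le_mono)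
  then have "(D + 1 + 120 * D) * (D + 1) + 30 * D * D \<le> 274 * (D * D)" by simp
  moreover have "D * D \<ge> 1" using D1 by simp
  ultimately show ?thesis using big by linarith
qed

lemma arith2: "40 * (122 * D + 2) < 2 * n"
proof (cases "D \<le> 200")
  case True
  have e: "40 * (122 * D + 2) = 4880 * D + 80" by simp
  show ?thesis unfolding e using True big2 by linarith
next
  case False
  then have "201 * D \<le> D * D" by simp
  moreover have e: "40 * (122 * D + 2) = 4880 * D + 80" by simp
  ultimately show ?thesis using big D1 by linarith
qed

lemma packing: "\<exists>\<sigma>. bij_betw \<sigma> {..<n} {..<n} \<and> (\<forall>i<n. \<forall>j<n. F i j \<longrightarrow> G (\<sigma> i) (\<sigma> j))"
proof -
  obtain P0 \<sigma>0 where b: "base P0 \<sigma>0" using base_exists by blast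
  have P0: "P0 \<subseteq> {..<n}" and inj0: "inj_on \<sigma>0 P0" and img0: "\<sigma>0 ` P0 \<subseteq> {..<n}"
    and fok0: "\<forall>i\<in>P0. \<forall>j\<in>P0. F i j \<longrightarrow> G (\<sigma>0 i) (\<sigma>0 j)"
    and Wb0: "\<forall>v<n. v \<notin> P0 \<longrightarrow> 10 * Wt n F G \<sigma>0 P0 v \<le> 9 * n" and cP0: "card P0 \<le> D + 1"
    and mg0: "\<forall>h<n. h \<notin> \<sigma>0 ` P0 \<longrightarrow> 10 * kd n G h \<le> 8 * n"
    using b unfolding base_def by auto
  have n0: "n > 0" using big2 by simp
  define B where "B = {u. u < n \<and> n < 40 * D * kd n G u}"
  have cB: "card B \<le> 120 * D" unfolding B_def by (rule heavy_count[OF total n0])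
  define Bf where "Bf = B - \<sigma>0 ` P0"
  have finB: "finite B" unfolding B_def by simp
  have Bf: "finite Bf" "Bf \<subseteq> {..<n}" "Bf \<inter> \<sigma>0 ` P0 = {}" using finB unfolding Bf_def B_def by auto
  have cBf: "card Bf \<le> 120 * D" using card_mono[OF finB, of Bf] cB unfolding Bf_def by auto
  have marg: "10 * kd n G h \<le> 8 * n" if "h \<in> Bf" for h using mg0 that unfolding Bf_def B_def by auto
  have cnt: "(card P0 + card Bf) * (D + 1) + 30 * D * D < n"
  proof -
    have "card P0 + card Bf \<le> D + 1 + 120 * D" using cP0 cBf by simp
    then have "(card P0 + card Bf) * (D + 1) \<le> (D + 1 + 120 * D) * (D + 1)" by (rule mult_right_mono) simp
    then show ?thesis using arith1 by linarith
  qed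
  have Wb0': "\<And>v. v < n \<Longrightarrow> v \<notin> P0 \<Longrightarrow> 10 * Wt n F G \<sigma>0 P0 v \<le> 9 * n" using Wb0 by blast
  obtain X \<sigma>1 where X: "X \<subseteq> {..<n}" "X \<inter> P0 = {}" "\<forall>i\<in>P0. \<sigma>1 i = \<sigma>0 i" "inj_on \<sigma>1 (P0 \<union> X)"
    "\<sigma>1 ` (P0 \<union> X) = \<sigma>0 ` P0 \<union> Bf" "\<forall>x\<in>X. \<forall>z\<in>P0 \<union> X. \<not> F x z"
    "\<forall>v<n. v \<notin> P0 \<union> X \<longrightarrow> 10 * Wt n F G \<sigma>1 (P0 \<union> X) v \<le> 9 * n" "card X = card Bf"
    using greedy[OF sF degF total n0 P0 inj0 img0 Wb0' Bf marg cnt] by blast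
  define P where "P = P0 \<union> X"
  have Psub: "P \<subseteq> {..<n}" unfolding P_def using P0 X(1) by auto
  have finP0: "finite P0" by (rule finite_subset[OF P0]) simp
  have finX: "finite X" by (rule finite_subset[OF X(1)]) simp
  have cP: "card P \<le> D + 1 + 120 * D"
  proof -
    have "card P \<le> card P0 + card X" unfolding P_def by (rule card_Un_le)
    then show ?thesis using cP0 X(8) cBf by linarith
  qed
  have imgP: "\<sigma>1 ` P \<subseteq> {..<n}" unfolding P_def using X(5) img0 Bf(2) by auto
  have BP: "B \<subseteq> \<sigma>1 ` P" unfolding P_def using X(5) unfolding Bf_def by auto
  show ?thesis
  proof (rule swap_lemma[OF sF sG degF Psub X(4)[folded P_def] imgP])
    fix i j assume i: "i \<in> P" and j: "j \<in> P" and Fij: "F i j"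
    show "G (\<sigma>1 i) (\<sigma>1 j)"
    proof (cases "i \<in> X")
      case True
      then show ?thesis using X(6) j Fij unfolding P_def by blast
    next
      case False
      show ?thesis
      proof (cases "j \<in> X")
        case True
        have "\<not> F j i" using X(6) True i unfolding P_def by blast
        then show ?thesis using Fs[OF Fij] by simp
      next
        case False2: False
        have "i \<in> P0" "j \<in> P0" using i j False False2 unfolding P_def by auto
        then show ?thesis using fok0 X(3) Fij by auto
      qed
    qed
  next
    fix \<sigma> x assume sig: "bij_betw \<sigma> {..<n} {..<n}" and ext: "\<forall>i\<in>P. \<sigma> i = \<sigma>1 i"
      and x: "x < n" and xP: "x \<notin> P"
    have sinj: "i < n \<Longrightarrow> j < n \<Longrightarrow> \<sigma> i = \<sigma> j \<Longrightarrow> i = j" for i j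
      using sig unfolding bij_betw_def inj_on_def by auto
    have light: "40 * D * kd n G (\<sigma> z) \<le> n" if "z < n" "z \<notin> P" for z
    proof -
      have "\<sigma> z \<notin> B"
      proof
        assume "\<sigma> z \<in> B"
        then obtain p where p: "p \<in> P" "\<sigma> z = \<sigma>1 p" using BP by auto
        then have "\<sigma> z = \<sigma> p" using ext by simp
        then have "z = p" using sinj that(1) p(1) Psub by auto
        then show False using that(2) p(1) by simp
      qed
      moreover have "\<sigma> z < n" using sig that(1) by (auto simp: bij_betw_def)
      ultimately show ?thesis unfolding B_def by auto
    qed
    have finN: "finite (nbF n F x)" unfolding nbF_def by simp
    have split: "(\<Sum>z\<in>nbF n F x. kd n G (\<sigma> z)) =
        (\<Sum>z\<in>nbF n F x \<inter> P. kd n G (\<sigma> z)) + (\<Sum>z\<in>nbF n F x - P. kd n G (\<sigma> z))"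
      by (rule sum.Int_Diff[OF finN])
    have first: "10 * (\<Sum>z\<in>nbF n F x \<inter> P. kd n G (\<sigma> z)) \<le> 9 * n"
    proof -
      have "(\<Sum>z\<in>nbF n F x \<inter> P. kd n G (\<sigma> z)) = Wt n F G \<sigma>1 P x"
        unfolding Wt_def using ext by (intro sum.cong) auto
      then show ?thesis using X(7) x xP unfolding P_def by auto
    qed
    have second: "40 * (\<Sum>z\<in>nbF n F x - P. kd n G (\<sigma> z)) \<le> n"
    proof -
      have "D * (40 * (\<Sum>z\<in>nbF n F x - P. kd n G (\<sigma> z))) = (\<Sum>z\<in>nbF n F x - P. 40 * D * kd n G (\<sigma> z))"
        by (simp add: sum_distrib_left mult.assoc mult.left_commute)
      also have "\<dots> \<le> (\<Sum>z\<in>nbF n F x - P. n)" using light by (intro sum_mono) (auto simp: nbF_def)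
      also have "\<dots> = card (nbF n F x - P) * n" by simp
      also have "\<dots> \<le> D * n"
      proof -
        have "card (nbF n F x - P) \<le> card (nbF n F x)" using finN by (intro card_mono) auto
        also have "\<dots> \<le> D" using degF[OF x] card_nbF by simp
        finally show ?thesis by simp
      qed
      finally show ?thesis using D1 by simp
    qed
    have third: "40 * (D * kd n G (\<sigma> x)) \<le> n" using light[OF x xP] by (simp add: mult.assoc)
    define S1 where "S1 = (\<Sum>z\<in>nbF n F x \<inter> P. kd n G (\<sigma> z))"
    define S2 where "S2 = (\<Sum>z\<in>nbF n F x - P. kd n G (\<sigma> z))"
    define T where "T = D * kd n G (\<sigma> x)"
    have e: "40 * ((\<Sum>z\<in>nbF n F x. kd n G (\<sigma> z)) + D * kd n G (\<sigma> x) + card P + D + 1) =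
       4 * (10 * S1) + 40 * S2 + 40 * T + 40 * (card P + D + 1)"
      unfolding split S1_def S2_def T_def by (simp add: algebra_simps)
    have e2: "40 * (card P + D + 1) \<le> 40 * (122 * D + 2)" using cP by simp
    have "40 * ((\<Sum>z\<in>nbF n F x. kd n G (\<sigma> z)) + D * kd n G (\<sigma> x) + card P + D + 1) < 40 * n"
      unfolding e using first[folded S1_def] second[folded S2_def] third[folded T_def] e2 arith2 by linarith
    then show "(\<Sum>z\<in>nbF n F x. kd n G (\<sigma> z)) + D * kd n G (\<sigma> x) + card P + D + 1 < n" by simp
  qed
qed

end


lemma sqrt_bound:
  assumes "real D \<le> sqrt (real n) / 40"
  shows "1600 * D * D \<le> n"
proof -
  have "40 * real D \<le> sqrt (real n)" using assms by simp
  then have "(40 * real D)^2 \<le> (sqrt (real n))^2" by (intro power_mono) auto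
  then have "1600 * real D * real D \<le> real n" by (simp add: power2_eq_square)
  then have "real (1600 * D * D) \<le> real n" by simp
  then show ?thesis by linarith
qed

theorem theorem1p4:
  shows "\<exists>n0::nat. \<forall>n\<ge>n0. \<forall>F G.
     sgraph n F \<longrightarrow> (\<forall>i<n. degree n F i \<ge> 1) \<longrightarrow>
     real (max_degree n F) \<le> sqrt (real n) / 40 \<longrightarrow>
     sgraph n G \<longrightarrow> \<not> contains_subgraph n G n F \<longrightarrow>
     spec_rad n G \<le> spec_rad n (H_graph n (min_degree n F)) \<and>
     (spec_rad n G = spec_rad n (H_graph n (min_degree n F))
        \<longleftrightarrow> graph_iso n G (H_graph n (min_degree n F)))"
proof (intro exI[of _ 1000000] allI impI)
  fix n :: nat and F G
  assume n: "n \<ge> 1000000" and sF: "sgraph n F" and deg1: "\<forall>i<n. degree n F i \<ge> 1"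
    and mx: "real (max_degree n F) \<le> sqrt (real n) / 40" and sG: "sgraph n G"
    and free: "\<not> contains_subgraph n G n F"
  define D where "D = max_degree n F"
  define dl where "dl = min_degree n F"
  have n0: "n > 0" and n3: "n \<ge> 3" using n by auto
  have fin: "finite (degree n F ` {..<n})" and ne: "degree n F ` {..<n} \<noteq> {}" using n0 by auto
  obtain x0 where x0: "x0 < n" "degree n F x0 = dl"
    using Min_in[OF fin ne] unfolding dl_def min_degree_def by auto
  have degF: "degree n F i \<le> D" if "i < n" for i
    unfolding D_def max_degree_def using fin that by (intro Max_ge) auto
  have dl1: "1 \<le> dl" using deg1 x0 by auto
  have D1: "1 \<le> D" using degF[OF x0(1)] x0(2) dl1 by simp
  have big: "1600 * D * D \<le> n" using sqrt_bound mx unfolding D_def by blast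
  have dlD: "dl \<le> D" using degF[OF x0(1)] x0(2) by simp
  have dln: "dl < n"
  proof -
    have "D * 1 < D * (1600 * D)" using D1 by (intro mult_strict_left_mono) auto
    then have "D < 1600 * D * D" by (simp add: mult.assoc mult.commute)
    then show ?thesis using dlD big D1 by linarith
  qed
  obtain mu where mu: "spec_rad n (H_graph n dl) = mu" "mu \<ge> real n - 2"
    "\<forall>\<pi> z. bij_betw \<pi> {..<n} {..<n} \<longrightarrow> Q (Hp n dl \<pi>) n z \<le> mu * nrm n z"
    using H_pkg[OF dl1 dln n3] by blast
  have iso_eq: "graph_iso n G (H_graph n dl) \<Longrightarrow> spec_rad n G = spec_rad n (H_graph n dl)"
    by (rule iso_spec_rad)
  have main: "spec_rad n G \<le> spec_rad n (H_graph n dl) \<and>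
     (spec_rad n G = spec_rad n (H_graph n dl)
        \<longleftrightarrow> graph_iso n G (H_graph n dl))"
  proof (cases "\<exists>v<n. degree n G v < dl")
    case True
    then obtain v where v: "v < n" "degree n G v < dl" by blast
    show ?thesis using caseA[OF sG dl1 dln n3 v] iso_eq by blast
  next
    case False
    then have degG: "\<And>u. u < n \<Longrightarrow> dl \<le> degree n G u" using not_less by blast
    have lt: "spec_rad n G < mu"
    proof (rule ccontr)
      assume "\<not> spec_rad n G < mu"
      then have lm: "mu \<le> spec_rad n G" by simp
      define lam where "lam = spec_rad n G"
      have lam: "lam \<ge> real n - 2" using lm mu(2) unfolding lam_def by simp
      have ev: "eigenvalue (adj_matrix n G) lam"
        unfolding lam_def by (rule spec_rad_props(1)[OF n0 sgraph_sym[OF sG]])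
      have lam0: "lam \<ge> 0" using lam n3 by simp
      obtain y where y: "\<forall>i. y i \<ge> 0" "\<exists>i<n. y i \<noteq> 0" "lam * nrm n y \<le> Q G n y"
        "\<forall>i<n. lam * y i \<le> (\<Sum>j<n. if G i j then y j else 0)"
        using eig_vec[OF ev] lam0 by blast
      interpret sb: specB2 n G lam y mu dl
      proof
        show "sgraph n G" by (rule sG)
        show "3 \<le> n" by (rule n3)
        show "real n - 2 \<le> lam" by (rule lam)
        show "\<And>i. 0 \<le> y i" using y(1) by blast
        show "\<exists>i<n. y i \<noteq> 0" by (rule y(2))
        show "\<And>i. i < n \<Longrightarrow> lam * y i \<le> (\<Sum>j<n. if G i j then y j else 0)" using y(4) by blast
        show "1 \<le> dl" "dl < n" using dl1 dln by auto
        show "mu \<le> lam" using lm unfolding lam_def by simp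
        show "\<And>\<pi> z. bij_betw \<pi> {..<n} {..<n} \<Longrightarrow> Q (Hp n dl \<pi>) n z \<le> mu * nrm n z" using mu(3) by blast
        show "lam * nrm n y \<le> Q G n y" by (rule y(3))
      qed
      interpret pk: pack n F G D dl x0
      proof
        show "sgraph n F" "sgraph n G" by (rule sF, rule sG)
        show "\<And>i. i < n \<Longrightarrow> degree n F i \<le> D" by (rule degF)
        show "1 \<le> D" by (rule D1)
        show "x0 < n" "degree n F x0 = dl" "1 \<le> dl" using x0 dl1 by auto
        show "\<And>u. u < n \<Longrightarrow> dl \<le> degree n G u" by (rule degG)
        show "(\<Sum>u<n. kd n G u) \<le> 3 * n" by (rule sb.kd_total)
        show "\<And>v0. v0 < n \<Longrightarrow> 5 * degree n G v0 \<le> n - 2 \<Longrightarrow> card (Mset n G v0) \<le> 2 * (degree n G v0 - dl)"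
          using sb.move degG by blast
        show "1600 * D * D \<le> n" by (rule big)
        show "1000000 \<le> n" by (rule n)
      qed
      obtain \<sigma> where s: "bij_betw \<sigma> {..<n} {..<n}" "\<forall>i<n. \<forall>j<n. F i j \<longrightarrow> G (\<sigma> i) (\<sigma> j)"
        using pk.packing by blast
      have "contains_subgraph n G n F" unfolding contains_subgraph_def
        using s by (intro exI[of _ \<sigma>]) (auto simp: bij_betw_def)
      then show False using free by simp
    qed
    have "\<not> graph_iso n G (H_graph n dl)" using iso_eq lt mu(1) by auto
    then show ?thesis using lt mu(1) by auto
  qed
  then show "spec_rad n G \<le> spec_rad n (H_graph n (min_degree n F)) \<and>
     (spec_rad n G = spec_rad n (H_graph n (min_degree n F))
        \<longleftrightarrow> graph_iso n G (H_graph n (min_degree n F)))"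
    unfolding dl_def .
qed

end
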